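(* Let $\mathbb{U}$ be a Euclidean space, let $\mathcal{M}\subset\mathbb{U}$ be a $C^{(2)}$-smooth manifold around a point $u\in\mathcal{M}$, and let $v\in N_{\mathcal{M}}(u)$. Then the normal mapping $N_{\mathcal{M}}\colon\mathbb{U}\rightrightarrows\mathbb{U}$ satisfies the derivative-coderivative equality $$DN_{\mathcal{M}}(u\,|\,v)=D^*N_{\mathcal{M}}(u\,|\,v).$$
   Context: A $C^{(2)}$-manifold around $u$ is a set that near $u$ equals the common zero set of $C^{(2)}$ functions $h_1,\dots,h_m$ with linearly independent gradients at $u$. $N_{\mathcal{M}}$ is the set-valued mapping sending $x\in\mathcal{M}$ (near $u$) to the classical normal space $N_{\mathcal{M}}(x)$ and points outside $\mathcal{M}$ to the empty set. For a set-valued mapping $\Phi$ and $(x,y)\in\mathrm{gph}\,\Phi$, the graphical derivative is defined by $z\in D\Phi(x\,|\,y)(w)\iff(w,z)\in T_{\mathrm{gph}\,\Phi}(x,y)$ (tangent cone to the graph), and the coderivative by $z\in D^*\Phi(x\,|\,y)(w)\iff(z,-w)\in N_{\mathrm{gph}\,\Phi}(x,y)$ (limiting normal cone to the graph). *)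

theory Defs
  imports "HOL-Analysis.Analysis"
begin

definition graph_of :: "('a \<Rightarrow> 'b set) \<Rightarrow> ('a \<times> 'b) set" where
  "graph_of \<Phi> = {(x, y). y \<in> \<Phi> x}"

definition tangent_cone :: "'a::real_normed_vector set \<Rightarrow> 'a \<Rightarrow> 'a set" where
  "tangent_cone S x = {w. \<exists>t :: nat \<Rightarrow> real. \<exists>ws :: nat \<Rightarrow> 'a.
      (\<forall>k. 0 < t k) \<and> t \<longlonglongrightarrow> 0 \<and> ws \<longlonglongrightarrow> w \<and> (\<forall>k. x + t k *\<^sub>R ws k \<in> S)}"

definition regular_normal_cone :: "'a::real_inner set \<Rightarrow> 'a \<Rightarrow> 'a set" where
  "regular_normal_cone S x =
     (if x \<in> S then {v. \<forall>\<epsilon>>0. \<exists>\<delta>>0. \<forall>y\<in>S. norm (y - x) < \<delta> \<longrightarrow>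
                           inner v (y - x) \<le> \<epsilon> * norm (y - x)}
      else {})"

definition limiting_normal_cone :: "'a::real_inner set \<Rightarrow> 'a \<Rightarrow> 'a set" where
  "limiting_normal_cone S x =
     (if x \<in> S then {v. \<exists>xs :: nat \<Rightarrow> 'a. \<exists>vs :: nat \<Rightarrow> 'a.
          (\<forall>k. xs k \<in> S) \<and> xs \<longlonglongrightarrow> x \<and> vs \<longlonglongrightarrow> v \<and>
          (\<forall>k. vs k \<in> regular_normal_cone S (xs k))}
      else {})"

definition graphical_derivative ::
  "('a::real_normed_vector \<Rightarrow> 'b::real_normed_vector set) \<Rightarrow> 'a \<Rightarrow> 'b \<Rightarrow> 'a \<Rightarrow> 'b set" where
  "graphical_derivative \<Phi> x y w = {z. (w, z) \<in> tangent_cone (graph_of \<Phi>) (x, y)}"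

definition coderivative ::
  "('a::real_inner \<Rightarrow> 'b::real_inner set) \<Rightarrow> 'a \<Rightarrow> 'b \<Rightarrow> 'b \<Rightarrow> 'a set" where
  "coderivative \<Phi> x y w = {z. (z, - w) \<in> limiting_normal_cone (graph_of \<Phi>) (x, y)}"

text \<open>C^2 on the open set U: each h i has gradient g i x, the gradient map g i is differentiable
  with derivative H i x, and x \<mapsto> H i x is continuous (tested on each direction d,
  equivalent to operator-norm continuity in finite dimension).\<close>
definition C2_manifold_around :: "'a::euclidean_space set \<Rightarrow> 'a \<Rightarrow> bool" where
  "C2_manifold_around M u \<longleftrightarrow> u \<in> M \<and>
     (\<exists>U m (h :: nat \<Rightarrow> 'a \<Rightarrow> real) (g :: nat \<Rightarrow> 'a \<Rightarrow> 'a) (H :: nat \<Rightarrow> 'a \<Rightarrow> 'a \<Rightarrow> 'a).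
        open U \<and> u \<in> U \<and>
        (\<forall>i<m. \<forall>x\<in>U. (h i has_derivative (\<lambda>d. inner (g i x) d)) (at x) \<and>
                        (g i has_derivative H i x) (at x)) \<and>
        (\<forall>i<m. \<forall>d. continuous_on U (\<lambda>x. H i x d)) \<and>
        M \<inter> U = {x \<in> U. \<forall>i<m. h i x = 0} \<and>
        inj_on (\<lambda>i. g i u) {..<m} \<and> independent ((\<lambda>i. g i u) ` {..<m}))"

definition normal_map :: "'a::euclidean_space set \<Rightarrow> 'a \<Rightarrow> 'a set" where
  "normal_map M x = (if x \<in> M then {v. \<forall>w\<in>tangent_cone M x. inner v w = 0} else {})"

end

theory Submission
  imports Defs
begin

lemma dq_limit:
  fixes f :: "'a::real_normed_vector \<Rightarrow> 'b::real_normed_vector"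
  assumes df: "(f has_derivative f') (at x)" and tpos: "\<And>k. 0 < t k"
    and t0: "t \<longlonglongrightarrow> 0" and wl: "ws \<longlonglongrightarrow> w"
  shows "(\<lambda>k. (f (x + t k *\<^sub>R ws k) - f x) /\<^sub>R t k) \<longlonglongrightarrow> f' w"
proof -
  have bl: "bounded_linear f'" using df by (simp add: has_derivative_at_alt)
  have lin: "(\<lambda>k. f' (ws k)) \<longlonglongrightarrow> f' w" using bounded_linear.tendsto[OF bl wl] .
  have R: "(\<lambda>k. (f (x + t k *\<^sub>R ws k) - f x) /\<^sub>R t k - f' (ws k)) \<longlonglongrightarrow> 0"
  proof (rule tendstoI)
    fix e :: real assume e: "0 < e"
    define B where "B = norm w + 1"
    have B: "0 < B" unfolding B_def using norm_ge_zero[of w] by linarith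
    have evB: "eventually (\<lambda>k. norm (ws k) < B) sequentially"
      using tendsto_norm[OF wl] unfolding B_def by (simp add: order_tendstoD(2))
    have e2: "e / (2*B) > 0" using e B by simp
    obtain d where d: "d > 0" "\<And>y. norm (y - x) < d \<Longrightarrow> norm (f y - f x - f' (y - x)) \<le> (e/(2*B)) * norm (y - x)"
      using df e2 unfolding has_derivative_at_alt by blast
    have "(\<lambda>k. t k *\<^sub>R ws k) \<longlonglongrightarrow> 0 *\<^sub>R w" by (intro tendsto_scaleR t0 wl)
    hence "(\<lambda>k. norm (t k *\<^sub>R ws k)) \<longlonglongrightarrow> 0" using tendsto_norm_zero by fastforce
    hence evd: "eventually (\<lambda>k. norm (t k *\<^sub>R ws k) < d) sequentially" using d(1) by (simp add: order_tendstoD(2))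
    show "eventually (\<lambda>k. dist ((f (x + t k *\<^sub>R ws k) - f x) /\<^sub>R t k - f' (ws k)) 0 < e) sequentially"
      using evB evd
    proof eventually_elim
      case (elim k)
      have tk: "0 < t k" by (rule tpos)
      have "(f (x + t k *\<^sub>R ws k) - f x) /\<^sub>R t k - f' (ws k)
          = inverse (t k) *\<^sub>R (f (x + t k *\<^sub>R ws k) - f x - f' (t k *\<^sub>R ws k))"
        using tk by (simp add: linear_simps(5)[OF bl] scaleR_diff_right)
      hence "dist ((f (x + t k *\<^sub>R ws k) - f x) /\<^sub>R t k - f' (ws k)) 0
          = norm (f (x + t k *\<^sub>R ws k) - f x - f' (t k *\<^sub>R ws k)) / t k"
        using tk by (simp add: dist_norm divide_inverse_commute)
      also have "\<dots> \<le> ((e/(2*B)) * norm (t k *\<^sub>R ws k)) / t k"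
        using d(2)[of "x + t k *\<^sub>R ws k"] elim tk by (intro divide_right_mono) auto
      also have "\<dots> = (e/(2*B)) * norm (ws k)" using tk by simp
      also have "\<dots> \<le> (e/(2*B)) * B" using elim e2 by (intro mult_left_mono) auto
      also have "\<dots> < e" using B e by simp
      finally show ?case .
    qed
  qed
  show ?thesis using tendsto_add[OF R lin] by simp
qed

lemma regular_normal_polar1:
  fixes S :: "'b::real_inner set"
  assumes n: "n \<in> regular_normal_cone S x" and w: "w \<in> tangent_cone S x"
  shows "n \<bullet> w \<le> 0"
proof -
  have xS: "x \<in> S" using n unfolding regular_normal_cone_def by (auto split: if_splits)
  obtain t ws where tp: "\<And>k. 0 < t k" and t0: "t \<longlonglongrightarrow> 0" and wl: "ws \<longlonglongrightarrow> w"
    and inS: "\<And>k. x + t k *\<^sub>R ws k \<in> S"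
    using w unfolding tangent_cone_def by blast
  have key: "n \<bullet> w \<le> e * norm w" if e: "e > 0" for e
  proof -
    obtain d where d: "d > 0" "\<And>y. y \<in> S \<Longrightarrow> norm (y - x) < d \<Longrightarrow> n \<bullet> (y - x) \<le> e * norm (y - x)"
      using n e xS unfolding regular_normal_cone_def by auto
    have "(\<lambda>k. t k *\<^sub>R ws k) \<longlonglongrightarrow> 0 *\<^sub>R w" by (intro tendsto_scaleR t0 wl)
    hence "(\<lambda>k. norm (t k *\<^sub>R ws k)) \<longlonglongrightarrow> 0" using tendsto_norm_zero by fastforce
    hence evd: "eventually (\<lambda>k. norm (t k *\<^sub>R ws k) < d) sequentially" using d(1) by (simp add: order_tendstoD(2))
    have ev: "eventually (\<lambda>k. n \<bullet> ws k \<le> e * norm (ws k)) sequentially"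
      using evd
    proof eventually_elim
      case (elim k)
      have "n \<bullet> (t k *\<^sub>R ws k) \<le> e * norm (t k *\<^sub>R ws k)"
        using d(2)[OF inS[of k]] elim by simp
      hence "t k * (n \<bullet> ws k) \<le> t k * (e * norm (ws k))"
        using tp[of k] by (simp add: mult_ac)
      thus ?case using tp[of k] by simp
    qed
    show ?thesis
      by (rule tendsto_le[OF trivial_limit_sequentially _ _ ev]) (intro tendsto_intros wl)+
  qed
  show ?thesis
  proof (rule ccontr)
    assume "\<not> n \<bullet> w \<le> 0"
    hence p: "n \<bullet> w > 0" by simp
    define e where "e = (n \<bullet> w) / (2 * (norm w + 1))"
    have pos2: "2*(norm w+1) > 0" by (smt (verit) norm_ge_zero)
    hence e: "e > 0" using p unfolding e_def by (intro divide_pos_pos)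
    have "e * norm w < n \<bullet> w"
    proof -
      have "e * norm w \<le> e * (norm w + 1)" using e by simp
      also have "\<dots> = (n \<bullet> w) / 2" using pos2 unfolding e_def by (simp add: field_simps)
      also have "\<dots> < n \<bullet> w" using p by simp
      finally show ?thesis .
    qed
    with key[OF e] show False by simp
  qed
qed

lemma regular_normal_polar2:
  fixes S :: "'b::euclidean_space set"
  assumes xS: "x \<in> S" and pol: "\<And>w. w \<in> tangent_cone S x \<Longrightarrow> n \<bullet> w \<le> 0"
  shows "n \<in> regular_normal_cone S x"
proof (rule ccontr)
  assume "n \<notin> regular_normal_cone S x"
  then obtain e where e: "e > 0" and
    bad: "\<And>d. d > 0 \<Longrightarrow> \<exists>y\<in>S. norm (y - x) < d \<and> n \<bullet> (y - x) > e * norm (y - x)"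
    using xS unfolding regular_normal_cone_def by (auto simp: not_le)
  have "\<forall>k. \<exists>y. y \<in> S \<and> norm (y - x) < 1 / Suc k \<and> n \<bullet> (y - x) > e * norm (y - x)"
    using bad by (metis of_nat_0_less_iff zero_less_Suc zero_less_divide_1_iff)
  then obtain y where y: "\<And>k. y k \<in> S" "\<And>k. norm (y k - x) < 1 / Suc k"
      "\<And>k. n \<bullet> (y k - x) > e * norm (y k - x)"
    by metis
  define t where "t k = norm (y k - x)" for k
  have tp: "t k > 0" for k
  proof -
    have "y k \<noteq> x" using y(3)[of k] by auto
    thus ?thesis by (simp add: t_def)
  qed
  define z where "z k = (1 / t k) *\<^sub>R (y k - x)" for k
  have nz: "norm (z k) = 1" for k using tp[of k] by (simp add: z_def t_def)
  have nzk: "n \<bullet> z k > e" for k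
  proof -
    have "n \<bullet> z k = (n \<bullet> (y k - x)) / t k" by (simp add: z_def)
    also have "\<dots> > (e * t k) / t k" using y(3)[of k] tp[of k] by (intro divide_strict_right_mono) (auto simp: t_def)
    finally show ?thesis using tp[of k] by simp
  qed
  have "bounded (range z)" using nz by (auto simp: bounded_iff)
  then obtain l r where r: "strict_mono r" and zl: "(z \<circ> r) \<longlonglongrightarrow> l"
    using bounded_imp_convergent_subsequence by blast
  have t0: "t \<longlonglongrightarrow> 0"
  proof (rule tendsto_sandwich[of "\<lambda>k. 0" _ _ "\<lambda>k. 1 / Suc k"])
    show "eventually (\<lambda>k. 0 \<le> t k) sequentially" using tp by (simp add: less_imp_le)
    show "eventually (\<lambda>k. t k \<le> 1 / Suc k) sequentially" using y(2) by (simp add: t_def less_imp_le)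
    show "(\<lambda>k. 1 / real (Suc k)) \<longlonglongrightarrow> 0" using LIMSEQ_Suc[OF lim_inverse_n'] by simp
  qed simp
  have tr0: "(t \<circ> r) \<longlonglongrightarrow> 0" using LIMSEQ_subseq_LIMSEQ[OF t0 r] .
  have "l \<in> tangent_cone S x"
    unfolding tangent_cone_def
  proof (intro CollectI exI conjI allI)
    show "\<And>k. 0 < (t \<circ> r) k" using tp by simp
    show "(t \<circ> r) \<longlonglongrightarrow> 0" by (rule tr0)
    show "(z \<circ> r) \<longlonglongrightarrow> l" by (rule zl)
    fix k
    have "x + t (r k) *\<^sub>R z (r k) = y (r k)" using tp[of "r k"] by (simp add: z_def)
    thus "x + (t \<circ> r) k *\<^sub>R (z \<circ> r) k \<in> S" using y(1) by simp
  qed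
  hence "n \<bullet> l \<le> 0" by (rule pol)
  moreover have "n \<bullet> l \<ge> e"
  proof (rule tendsto_le[OF trivial_limit_sequentially])
    show "(\<lambda>k. n \<bullet> (z \<circ> r) k) \<longlonglongrightarrow> n \<bullet> l" by (intro tendsto_intros zl)
    show "(\<lambda>k. e) \<longlonglongrightarrow> e" by simp
    show "eventually (\<lambda>k. e \<le> n \<bullet> (z \<circ> r) k) sequentially" using nzk by (simp add: less_imp_le)
  qed
  ultimately show False using e by simp
qed

lemma line_deriv:
  fixes f :: "'a::real_inner \<Rightarrow> real"
  assumes "(f has_derivative (\<lambda>d. g (p + s *\<^sub>R a) \<bullet> d)) (at (p + s *\<^sub>R a))"
  shows "((\<lambda>s. f (p + s *\<^sub>R a)) has_real_derivative (g (p + s *\<^sub>R a) \<bullet> a)) (at s)"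
proof -
  have l: "((\<lambda>s. p + s *\<^sub>R a) has_derivative (\<lambda>h. h *\<^sub>R a)) (at s)"
    by (auto intro!: derivative_eq_intros)
  have "((\<lambda>s. f (p + s *\<^sub>R a)) has_derivative (\<lambda>h. g (p + s *\<^sub>R a) \<bullet> (h *\<^sub>R a))) (at s)"
    using has_derivative_compose[OF l assms] by (simp add: o_def)
  moreover have "(\<lambda>h. g (p + s *\<^sub>R a) \<bullet> (h *\<^sub>R a)) = (*) (g (p + s *\<^sub>R a) \<bullet> a)"
    by (auto simp: mult.commute)
  ultimately show ?thesis by (simp add: has_field_derivative_def)
qed

lemma young_half:
  fixes f :: "'a::real_inner \<Rightarrow> real"
  assumes U: "open U" "x \<in> U" and df: "\<And>y. y \<in> U \<Longrightarrow> (f has_derivative (\<lambda>d. g y \<bullet> d)) (at y)"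
    and dg: "(g has_derivative G) (at x)" and e: "e > 0"
  shows "\<exists>\<tau>>0. \<forall>t. 0 < t \<and> t < \<tau> \<longrightarrow>
     \<bar>(f (x + t *\<^sub>R a + t *\<^sub>R b) - f (x + t *\<^sub>R a) - f (x + t *\<^sub>R b) + f x) - t^2 * (G b \<bullet> a)\<bar> \<le> e * t^2"
proof -
  obtain \<rho> where \<rho>: "\<rho> > 0" "ball x \<rho> \<subseteq> U" using U open_contains_ball by blast
  define N where "N = norm a + norm b + 1"
  have N: "N \<ge> 1" "norm a \<le> N" "norm b \<le> N" unfolding N_def by (auto simp: add_nonneg_nonneg)
  define e' where "e' = e / (2 * N^2)"
  have e': "e' > 0" using e N by (simp add: e'_def)
  have bl: "bounded_linear G" using dg by (simp add: has_derivative_at_alt)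
  obtain d where d: "d > 0" "\<And>y. norm (y - x) < d \<Longrightarrow> norm (g y - g x - G (y - x)) \<le> e' * norm (y - x)"
    using dg e' unfolding has_derivative_at_alt by blast
  define \<tau> where "\<tau> = min \<rho> d / N"
  have \<tau>: "\<tau> > 0" using \<rho> d N by (simp add: \<tau>_def)
  show ?thesis
  proof (intro exI[of _ \<tau>] conjI allI impI \<tau>)
    fix t :: real assume t: "0 < t \<and> t < \<tau>"
    have tN: "t * N < min \<rho> d" using t N unfolding \<tau>_def by (simp add: pos_less_divide_eq)
    have nb1: "norm (s *\<^sub>R a + t *\<^sub>R b) \<le> t * N" if "0 \<le> s" "s \<le> t" for s
    proof -
      have "norm (s *\<^sub>R a + t *\<^sub>R b) \<le> s * norm a + t * norm b"
        using that t norm_triangle_ineq[of "s *\<^sub>R a" "t *\<^sub>R b"] by simp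
      also have "\<dots> \<le> t * norm a + t * norm b" using that by (simp add: mult_right_mono)
      also have "\<dots> \<le> t * N" using t unfolding N_def by (simp add: distrib_left)
      finally show ?thesis .
    qed
    have nb2: "norm (s *\<^sub>R a) \<le> t * N" if "0 \<le> s" "s \<le> t" for s
    proof -
      have "norm (s *\<^sub>R a) = s * norm a" using that by simp
      also have "\<dots> \<le> t * N" using that N t by (intro mult_mono) auto
      finally show ?thesis .
    qed
    define \<psi> where "\<psi> s = f ((x + t *\<^sub>R b) + s *\<^sub>R a) - f (x + s *\<^sub>R a)" for s
    define \<psi>' where "\<psi>' s = g ((x + t *\<^sub>R b) + s *\<^sub>R a) \<bullet> a - g (x + s *\<^sub>R a) \<bullet> a" for s
    have inU1: "(x + t *\<^sub>R b) + s *\<^sub>R a \<in> U" if "0 \<le> s" "s \<le> t" for s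
    proof -
      have "dist x ((x + t *\<^sub>R b) + s *\<^sub>R a) = norm (((x + t *\<^sub>R b) + s *\<^sub>R a) - x)"
        unfolding dist_norm by (rule norm_minus_commute)
      also have "\<dots> = norm (s *\<^sub>R a + t *\<^sub>R b)" by (simp add: add.commute)
      also have "\<dots> < \<rho>" using nb1[OF that] tN by simp
      finally show ?thesis using \<rho>(2) by auto
    qed
    have inU2: "x + s *\<^sub>R a \<in> U" if "0 \<le> s" "s \<le> t" for s
    proof -
      have "dist x (x + s *\<^sub>R a) = norm (s *\<^sub>R a)" by (simp add: dist_norm)
      also have "\<dots> < \<rho>" using nb2[OF that] tN by simp
      finally show ?thesis using \<rho>(2) by auto
    qed
    have der: "(\<psi> has_real_derivative \<psi>' s) (at s)" if "0 \<le> s" "s \<le> t" for s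
      unfolding \<psi>_def[abs_def] \<psi>'_def
      by (intro DERIV_diff line_deriv df inU1 inU2 that)
    obtain \<xi> where \<xi>: "0 < \<xi>" "\<xi> < t" "\<psi> t - \<psi> 0 = (t - 0) * \<psi>' \<xi>"
      using MVT2[of 0 t \<psi> \<psi>'] der t by auto
    have \<Delta>: "f (x + t *\<^sub>R a + t *\<^sub>R b) - f (x + t *\<^sub>R a) - f (x + t *\<^sub>R b) + f x = \<psi> t - \<psi> 0"
      unfolding \<psi>_def by (simp add: algebra_simps)
    define y1 where "y1 = (x + t *\<^sub>R b) + \<xi> *\<^sub>R a"
    define y2 where "y2 = x + \<xi> *\<^sub>R a"
    have n1: "norm (y1 - x) < d" "norm (y1 - x) \<le> t * N"
      using nb1[of \<xi>] \<xi> tN unfolding y1_def by (auto simp: algebra_simps)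
    have n2: "norm (y2 - x) < d" "norm (y2 - x) \<le> t * N"
      using nb2[of \<xi>] \<xi> tN unfolding y2_def by (auto simp: algebra_simps)
    have Gdiff: "G (y1 - x) - G (y2 - x) = t *\<^sub>R G b"
    proof -
      have "G (y1 - x) - G (y2 - x) = G ((y1 - x) - (y2 - x))" by (rule linear_simps(2)[OF bl, symmetric])
      also have "(y1 - x) - (y2 - x) = y1 - y2" by simp
      also have "y1 - y2 = t *\<^sub>R b" by (simp add: y1_def y2_def)
      finally show ?thesis by (simp add: linear_simps(5)[OF bl])
    qed
    have "g y1 - g y2 - t *\<^sub>R G b = (g y1 - g x - G (y1 - x)) - (g y2 - g x - G (y2 - x))"
      using Gdiff by (simp add: algebra_simps)
    hence "norm (g y1 - g y2 - t *\<^sub>R G b) \<le> e' * norm (y1 - x) + e' * norm (y2 - x)"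
      using d(2)[OF n1(1)] d(2)[OF n2(1)] norm_triangle_ineq4 by (smt (verit))
    also have "\<dots> \<le> e' * (t * N) + e' * (t * N)"
      using n1(2) n2(2) e' by (intro add_mono mult_left_mono) auto
    finally have nb: "norm (g y1 - g y2 - t *\<^sub>R G b) \<le> 2 * e' * t * N" by (simp add: mult_ac)
    have "\<bar>\<psi>' \<xi> - t * (G b \<bullet> a)\<bar> = \<bar>(g y1 - g y2 - t *\<^sub>R G b) \<bullet> a\<bar>"
      unfolding \<psi>'_def y1_def y2_def by (simp add: algebra_simps inner_diff_left)
    also have "\<dots> \<le> norm (g y1 - g y2 - t *\<^sub>R G b) * norm a" by (rule Cauchy_Schwarz_ineq2)
    also have "\<dots> \<le> (2 * e' * t * N) * N" using nb N e' t by (intro mult_mono) auto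
    finally have b1: "\<bar>\<psi>' \<xi> - t * (G b \<bullet> a)\<bar> \<le> 2 * e' * t * N * N" .
    have "\<bar>(\<psi> t - \<psi> 0) - t^2 * (G b \<bullet> a)\<bar> = t * \<bar>\<psi>' \<xi> - t * (G b \<bullet> a)\<bar>"
    proof -
      have "(\<psi> t - \<psi> 0) - t^2 * (G b \<bullet> a) = t * (\<psi>' \<xi> - t * (G b \<bullet> a))"
        using \<xi>(3) by (simp add: power2_eq_square algebra_simps)
      thus ?thesis using t by (simp add: abs_mult)
    qed
    also have "\<dots> \<le> t * (2 * e' * t * N * N)" using b1 t by (intro mult_left_mono) auto
    also have "\<dots> = e * t^2" using N unfolding e'_def by (simp add: power2_eq_square field_simps)
    finally show "\<bar>(f (x + t *\<^sub>R a + t *\<^sub>R b) - f (x + t *\<^sub>R a) - f (x + t *\<^sub>R b) + f x) - t^2 * (G b \<bullet> a)\<bar> \<le> e * t^2"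
      using \<Delta> by simp
  qed
qed

lemma abs_two_aux:
  fixes A A' P Q E :: real
  assumes "\<bar>A - P\<bar> \<le> E" "\<bar>A' - Q\<bar> \<le> E" "A = A'"
  shows "\<bar>P - Q\<bar> \<le> 2 * E"
  using assms by arith

lemma hessian_symmetric:
  fixes f :: "'a::real_inner \<Rightarrow> real"
  assumes U: "open U" "x \<in> U" and df: "\<And>y. y \<in> U \<Longrightarrow> (f has_derivative (\<lambda>d. g y \<bullet> d)) (at y)"
    and dg: "(g has_derivative G) (at x)"
  shows "G b \<bullet> a = G a \<bullet> b"
proof (rule ccontr)
  assume ne: "G b \<bullet> a \<noteq> G a \<bullet> b"
  define e where "e = \<bar>G b \<bullet> a - G a \<bullet> b\<bar> / 4"
  have e: "e > 0" using ne by (simp add: e_def)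
  obtain \<tau>1 where t1: "\<tau>1 > 0" "\<And>t. 0 < t \<and> t < \<tau>1 \<Longrightarrow>
     \<bar>(f (x + t *\<^sub>R a + t *\<^sub>R b) - f (x + t *\<^sub>R a) - f (x + t *\<^sub>R b) + f x) - t^2 * (G b \<bullet> a)\<bar> \<le> e * t^2"
    using young_half[OF U df dg e, of a b] by blast
  obtain \<tau>2 where t2: "\<tau>2 > 0" "\<And>t. 0 < t \<and> t < \<tau>2 \<Longrightarrow>
     \<bar>(f (x + t *\<^sub>R b + t *\<^sub>R a) - f (x + t *\<^sub>R b) - f (x + t *\<^sub>R a) + f x) - t^2 * (G a \<bullet> b)\<bar> \<le> e * t^2"
    using young_half[OF U df dg e, of b a] by blast
  define t where "t = min \<tau>1 \<tau>2 / 2"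
  have t: "0 < t" "t < \<tau>1" "t < \<tau>2" using t1 t2 by (auto simp: t_def)
  have s: "x + t *\<^sub>R b + t *\<^sub>R a = x + t *\<^sub>R a + t *\<^sub>R b" by (simp add: algebra_simps)
  have "\<bar>t^2 * (G b \<bullet> a) - t^2 * (G a \<bullet> b)\<bar> \<le> 2 * e * t^2"
    using abs_two_aux[OF t1(2)[OF conjI[OF t(1) t(2)]] t2(2)[OF conjI[OF t(1) t(3)]]] unfolding s by (simp add: algebra_simps)
  hence "t^2 * \<bar>G b \<bullet> a - G a \<bullet> b\<bar> \<le> t^2 * (2 * e)"
    by (simp add: abs_mult flip: right_diff_distrib) (simp add: algebra_simps)
  hence "\<bar>G b \<bullet> a - G a \<bullet> b\<bar> \<le> 2 * e" using t by simp
  thus False using e unfolding e_def by simp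
qed

locale c2m =
  fixes M :: "'a::euclidean_space set" and u :: 'a and U :: "'a set" and m :: nat
    and h :: "nat \<Rightarrow> 'a \<Rightarrow> real" and g :: "nat \<Rightarrow> 'a \<Rightarrow> 'a" and H :: "nat \<Rightarrow> 'a \<Rightarrow> 'a \<Rightarrow> 'a"
  assumes U_open: "open U" and uU: "u \<in> U" and uM: "u \<in> M"
    and dh: "\<And>i x. i < m \<Longrightarrow> x \<in> U \<Longrightarrow> (h i has_derivative (\<lambda>d. g i x \<bullet> d)) (at x)"
    and dg: "\<And>i x. i < m \<Longrightarrow> x \<in> U \<Longrightarrow> (g i has_derivative H i x) (at x)"
    and Hc: "\<And>i d. i < m \<Longrightarrow> continuous_on U (\<lambda>x. H i x d)"
    and MU: "M \<inter> U = {x \<in> U. \<forall>i<m. h i x = 0}"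
    and ginj: "inj_on (\<lambda>i. g i u) {..<m}"
    and gind: "independent ((\<lambda>i. g i u) ` {..<m})"
begin

definition Sg :: "'a \<Rightarrow> (nat \<Rightarrow> real) \<Rightarrow> 'a" where "Sg x c = (\<Sum>i<m. c i *\<^sub>R g i x)"
definition Kg :: "'a \<Rightarrow> 'a set" where "Kg x = {w. \<forall>i<m. g i x \<bullet> w = 0}"
definition Hg :: "'a \<Rightarrow> (nat \<Rightarrow> real) \<Rightarrow> 'a \<Rightarrow> 'a" where "Hg x c w = (\<Sum>i<m. c i *\<^sub>R H i x w)"

lemma g_cont: "i < m \<Longrightarrow> x \<in> U \<Longrightarrow> isCont (g i) x"
  using dg has_derivative_continuous by blast

lemma H_lin: "i < m \<Longrightarrow> x \<in> U \<Longrightarrow> bounded_linear (H i x)"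
  using dg has_derivative_bounded_linear by blast

lemma Sg_inner_K: "w \<in> Kg x \<Longrightarrow> Sg x c \<bullet> w = 0"
  by (simp add: Sg_def Kg_def inner_sum_left)

lemma Sg_add: "Sg x c1 + Sg x c2 = Sg x (\<lambda>i. c1 i + c2 i)"
  by (simp add: Sg_def scaleR_add_left sum.distrib)

lemma Sg_diff: "Sg x c1 - Sg x c2 = Sg x (\<lambda>i. c1 i - c2 i)"
  by (simp add: Sg_def scaleR_diff_left sum_subtractf)

lemma Sg_scale: "r *\<^sub>R Sg x c = Sg x (\<lambda>i. r * c i)"
  by (simp add: Sg_def scaleR_sum_right)

lemma Sg_zero: "Sg x (\<lambda>i. 0) = 0"
  by (simp add: Sg_def)

lemma span_Sg: "span ((\<lambda>i. g i x) ` {..<m}) \<subseteq> range (Sg x)"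
proof (rule span_minimal)
  show "(\<lambda>i. g i x) ` {..<m} \<subseteq> range (Sg x)"
  proof
    fix y assume "y \<in> (\<lambda>i. g i x) ` {..<m}"
    then obtain j where j: "j < m" "y = g j x" by auto
    have "Sg x (\<lambda>i. if i = j then 1 else 0) = (\<Sum>i<m. (if i = j then g i x else 0))"
      unfolding Sg_def by (rule sum.cong) auto
    also have "\<dots> = g j x" using j(1) by (simp add: sum.delta)
    finally have "Sg x (\<lambda>i. if i = j then 1 else 0) = g j x" .
    thus "y \<in> range (Sg x)" using j by (metis rangeI)
  qed
  show "subspace (range (Sg x))"
    unfolding subspace_def
  proof (intro conjI ballI allI)
    show "0 \<in> range (Sg x)" using Sg_zero[of x] by (metis rangeI)
    fix a b assume "a \<in> range (Sg x)" "b \<in> range (Sg x)"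
    then obtain c1 c2 where "a = Sg x c1" "b = Sg x c2" by blast
    thus "a + b \<in> range (Sg x)" using Sg_add[of x c1 c2] by simp
  next
    fix r a assume "a \<in> range (Sg x)"
    then obtain c1 where "a = Sg x c1" by blast
    thus "r *\<^sub>R a \<in> range (Sg x)" using Sg_scale[of r x c1] by simp
  qed
qed

lemma perp_K_Sg:
  assumes "\<And>k. k \<in> Kg x \<Longrightarrow> y \<bullet> k = 0"
  shows "\<exists>c. y = Sg x c"
proof -
  obtain a z where a: "a \<in> span ((\<lambda>i. g i x) ` {..<m})"
    and z: "\<And>w. w \<in> span ((\<lambda>i. g i x) ` {..<m}) \<Longrightarrow> orthogonal z w" and y: "y = a + z"
    using orthogonal_subspace_decomp_exists[of "(\<lambda>i. g i x) ` {..<m}" y] by blast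
  have "z \<in> Kg x"
    unfolding Kg_def
  proof (intro CollectI allI impI)
    fix i assume "i < m"
    hence "g i x \<in> span ((\<lambda>i. g i x) ` {..<m})" by (intro span_base) auto
    hence "z \<bullet> g i x = 0" using z[of "g i x"] unfolding orthogonal_def by blast
    thus "g i x \<bullet> z = 0" by (simp only: inner_commute)
  qed
  hence "y \<bullet> z = 0" by (rule assms)
  moreover have "a \<bullet> z = 0" using z[OF a] by (simp add: orthogonal_def inner_commute)
  ultimately have "z \<bullet> z = 0" unfolding y by (simp add: inner_add_left)
  hence "z = 0" by simp
  hence "y = a" using y by simp
  thus ?thesis using a span_Sg by blast
qed

lemma coef_bound:
  "\<exists>r0>0. \<exists>C>0. ball u r0 \<subseteq> U \<and> (\<forall>x\<in>ball u r0. \<forall>c. (\<Sum>i<m. \<bar>c i\<bar>) \<le> C * norm (Sg x c))"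
proof -
  have ex: "\<exists>l. linear l \<and> (\<forall>i<m. l (g i u) = (if i = j then 1 else (0::real)))" if j: "j < m" for j
  proof -
    obtain l :: "'a \<Rightarrow> real" where l: "linear l"
      "\<forall>y\<in>(\<lambda>i. g i u) ` {..<m}. l y = (if y = g j u then 1 else 0)"
      using linear_independent_extend[OF gind, of "\<lambda>y. if y = g j u then 1 else (0::real)"] by blast
    have "\<forall>i<m. l (g i u) = (if i = j then 1 else 0)"
    proof (intro allI impI)
      fix i assume i: "i < m"
      have "(g i u = g j u) = (i = j)" using inj_onD[OF ginj, of i j] i j by auto
      thus "l (g i u) = (if i = j then 1 else 0)" using l(2) i by auto
    qed
    thus "\<exists>l. linear l \<and> (\<forall>i<m. l (g i u) = (if i = j then 1 else (0::real)))" using l(1) by blast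
  qed
  have "\<forall>j. \<exists>l. j < m \<longrightarrow> linear l \<and> (\<forall>i<m. l (g i u) = (if i = j then 1 else (0::real)))"
  proof
    fix j show "\<exists>l. j < m \<longrightarrow> linear l \<and> (\<forall>i<m. l (g i u) = (if i = j then 1 else (0::real)))"
      using ex[of j] by blast
  qed
  from choice[OF this] obtain l where l0: "\<forall>j. j < m \<longrightarrow> linear (l j) \<and> (\<forall>i<m. l j (g i u) = (if i = j then 1 else (0::real)))"
    by blast
  have l: "\<And>j. j < m \<Longrightarrow> linear (l j)"
    "\<And>j i. j < m \<Longrightarrow> i < m \<Longrightarrow> l j (g i u) = (if i = j then 1 else (0::real))"
    using l0 by blast+
  have exB: "\<exists>B. B > 0 \<and> (\<forall>y. \<bar>l j y\<bar> \<le> norm y * B)" if j: "j < m" for j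
  proof -
    have "bounded_linear (l j)" using l(1)[OF j] by (simp add: linear_conv_bounded_linear)
    from bounded_linear.pos_bounded[OF this] show "\<exists>B. B > 0 \<and> (\<forall>y. \<bar>l j y\<bar> \<le> norm y * B)"
      by simp
  qed
  have "\<forall>j. \<exists>B. j < m \<longrightarrow> B > 0 \<and> (\<forall>y. \<bar>l j y\<bar> \<le> norm y * B)"
  proof
    fix j show "\<exists>B. j < m \<longrightarrow> B > 0 \<and> (\<forall>y. \<bar>l j y\<bar> \<le> norm y * B)"
      using exB[of j] by blast
  qed
  from choice[OF this] obtain B where B0: "\<forall>j. j < m \<longrightarrow> B j > 0 \<and> (\<forall>y. \<bar>l j y\<bar> \<le> norm y * B j)"
    by blast
  have B: "\<And>j. j < m \<Longrightarrow> B j > 0" "\<And>j y. j < m \<Longrightarrow> \<bar>l j y\<bar> \<le> norm y * B j"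
    using B0 by blast+
  define Bt where "Bt = (\<Sum>j<m. B j) + 1"
  have "0 \<le> (\<Sum>j<m. B j)" by (rule sum_nonneg) (simp add: B(1) less_imp_le)
  hence Bt: "Bt > 0" unfolding Bt_def by linarith
  have coef_u: "l j (Sg u c) = c j" if j: "j < m" for j c
  proof -
    have "l j (Sg u c) = (\<Sum>i<m. c i * l j (g i u))"
      unfolding Sg_def using l(1)[OF j] by (simp add: linear_sum linear_cmul)
    also have "\<dots> = (\<Sum>i<m. if i = j then c i else 0)"
      using l(2)[OF j] by (intro sum.cong) auto
    also have "\<dots> = c j" using j by simp
    finally show ?thesis .
  qed
  have bound_u: "(\<Sum>i<m. \<bar>c i\<bar>) \<le> Bt * norm (Sg u c)" for c
  proof -
    have "(\<Sum>i<m. \<bar>c i\<bar>) \<le> (\<Sum>i<m. norm (Sg u c) * B i)"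
    proof (rule sum_mono)
      fix i assume "i \<in> {..<m}"
      hence i: "i < m" by simp
      show "\<bar>c i\<bar> \<le> norm (Sg u c) * B i" using B(2)[OF i, of "Sg u c"] coef_u[OF i, of c] by simp
    qed
    also have "\<dots> = norm (Sg u c) * (\<Sum>i<m. B i)" by (simp add: sum_distrib_left)
    also have "\<dots> \<le> Bt * norm (Sg u c)" unfolding Bt_def by (simp add: algebra_simps)
    finally show ?thesis .
  qed
  define \<eta> where "\<eta> = 1 / (2 * Bt)"
  have \<eta>: "\<eta> > 0" using Bt by (simp add: \<eta>_def)
  have ev1: "eventually (\<lambda>x. x \<in> U) (nhds u)" by (rule eventually_nhds_in_open[OF U_open uU])
  have ev2: "eventually (\<lambda>x. \<forall>i\<in>{..<m}. dist (g i x) (g i u) < \<eta>) (nhds u)"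
  proof (rule eventually_ball_finite)
    show "finite {..<m}" by simp
    show "\<forall>i\<in>{..<m}. eventually (\<lambda>x. dist (g i x) (g i u) < \<eta>) (nhds u)"
    proof
      fix i assume "i \<in> {..<m}"
      hence c: "isCont (g i) u" using g_cont uU by simp
      obtain \<delta> where "\<delta> > 0" "\<And>x'. dist x' u < \<delta> \<Longrightarrow> dist (g i x') (g i u) < \<eta>"
        using c \<eta> unfolding continuous_at_eps_delta by blast
      thus "eventually (\<lambda>x. dist (g i x) (g i u) < \<eta>) (nhds u)"
        unfolding eventually_nhds_metric by blast
    qed
  qed
  have "eventually (\<lambda>x. x \<in> U \<and> (\<forall>i\<in>{..<m}. dist (g i x) (g i u) < \<eta>)) (nhds u)"
    using eventually_conj[OF ev1 ev2] .
  then obtain r0 where r0: "r0 > 0" "\<And>x. dist x u < r0 \<Longrightarrow> x \<in> U \<and> (\<forall>i\<in>{..<m}. dist (g i x) (g i u) < \<eta>)"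
    unfolding eventually_nhds_metric by blast
  have Bt2: "2 * Bt > 0" using Bt by simp
  have sub: "ball u r0 \<subseteq> U" using r0(2) by (auto simp: dist_commute)
  have main: "\<forall>x\<in>ball u r0. \<forall>c. (\<Sum>i<m. \<bar>c i\<bar>) \<le> (2 * Bt) * norm (Sg x c)"
  proof (intro ballI allI)
    fix x c assume x: "x \<in> ball u r0"
    have gx: "\<And>i. i < m \<Longrightarrow> norm (g i x - g i u) \<le> \<eta>"
    proof -
      fix i assume i: "i < m"
      have "dist x u < r0" using x by (simp add: dist_commute)
      hence "dist (g i x) (g i u) < \<eta>" using r0(2)[of x] i by auto
      thus "norm (g i x - g i u) \<le> \<eta>" by (simp add: dist_norm)
    qed
    have "norm (Sg x c - Sg u c) = norm (\<Sum>i<m. c i *\<^sub>R (g i x - g i u))"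
      by (simp add: Sg_def sum_subtractf scaleR_diff_right)
    also have "\<dots> \<le> (\<Sum>i<m. \<bar>c i\<bar> * norm (g i x - g i u))"
      by (rule order_trans[OF norm_sum]) simp
    also have "\<dots> \<le> (\<Sum>i<m. \<bar>c i\<bar> * \<eta>)"
      using gx by (intro sum_mono mult_left_mono) auto
    finally have d: "norm (Sg x c - Sg u c) \<le> \<eta> * (\<Sum>i<m. \<bar>c i\<bar>)"
      by (simp add: sum_distrib_left mult.commute)
    have "norm (Sg u c) \<le> norm (Sg x c) + norm (Sg x c - Sg u c)"
      using norm_triangle_ineq2[of "Sg u c" "Sg x c"] by (simp add: norm_minus_commute)
    hence "norm (Sg u c) \<le> norm (Sg x c) + \<eta> * (\<Sum>i<m. \<bar>c i\<bar>)" using d by linarith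
    hence "(\<Sum>i<m. \<bar>c i\<bar>) \<le> Bt * (norm (Sg x c) + \<eta> * (\<Sum>i<m. \<bar>c i\<bar>))"
      using bound_u[of c] Bt by (meson mult_left_mono order_trans less_imp_le)
    also have "\<dots> = Bt * norm (Sg x c) + (\<Sum>i<m. \<bar>c i\<bar>) / 2"
      using Bt by (simp add: \<eta>_def algebra_simps)
    finally show "(\<Sum>i<m. \<bar>c i\<bar>) \<le> 2 * Bt * norm (Sg x c)" by simp
  qed
  show ?thesis using r0(1) Bt2 sub main by blast
qed

end

lemma orth_span:
  fixes v :: "'a::real_inner"
  assumes "\<And>y. y \<in> A \<Longrightarrow> y \<bullet> v = 0" "s \<in> span A"
  shows "s \<bullet> v = 0"
proof -
  have "orthogonal v s"
    using orthogonal_to_span[OF assms(2), of v] assms(1) by (simp add: orthogonal_def inner_commute)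
  thus ?thesis by (simp add: orthogonal_def inner_commute)
qed

locale c2mb = c2m +
  fixes r0 Cb :: real
  assumes r0: "r0 > 0" and Cb: "Cb > 0" and VU: "ball u r0 \<subseteq> U"
    and bnd: "\<And>x c. x \<in> ball u r0 \<Longrightarrow> (\<Sum>i<m. \<bar>c i\<bar>) \<le> Cb * norm (Sg x c)"
begin

lemma Sg_zero_coef:
  assumes "x \<in> ball u r0" "Sg x c = 0" "i < m"
  shows "c i = 0"
proof -
  have "\<bar>c i\<bar> \<le> (\<Sum>i<m. \<bar>c i\<bar>)" using assms(3) by (intro member_le_sum) auto
  also have "\<dots> \<le> 0" using bnd[OF assms(1), of c] assms(2) by simp
  finally show ?thesis by simp
qed

lemma K_sub_tangent:
  assumes xM: "x \<in> M" and xV: "x \<in> ball u r0" and a: "a \<in> Kg x"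
  shows "\<exists>t ws. (\<forall>k. 0 < t k) \<and> t \<longlonglongrightarrow> 0 \<and> ws \<longlonglongrightarrow> a \<and> (\<forall>k. x + t k *\<^sub>R ws k \<in> M \<inter> ball u r0)"
proof -
  have xU: "x \<in> U" using xV VU by auto
  define Gs where "Gs = (\<lambda>i. g i x) ` {..<m}"
  have "\<exists>Bs. Bs \<subseteq> span Gs \<and> pairwise orthogonal Bs \<and> (\<forall>b\<in>Bs. norm b = 1) \<and> independent Bs \<and> span Bs = span Gs"
  proof (rule orthonormal_basis_subspace[OF subspace_span[of Gs]])
    fix B assume "B \<subseteq> span Gs" "pairwise orthogonal B" "\<And>x. x \<in> B \<Longrightarrow> norm x = 1" "independent B"
      "card B = dim (span Gs)" "span B = span Gs"
    thus "\<exists>Bs. Bs \<subseteq> span Gs \<and> pairwise orthogonal Bs \<and> (\<forall>b\<in>Bs. norm b = 1) \<and> independent Bs \<and> span Bs = span Gs"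
      by blast
  qed
  then obtain Bs where Bs0: "Bs \<subseteq> span Gs \<and> pairwise orthogonal Bs \<and> (\<forall>b\<in>Bs. norm b = 1) \<and> independent Bs \<and> span Bs = span Gs"
    by blast
  have Bs: "Bs \<subseteq> span Gs" "pairwise orthogonal Bs" "\<And>b. b \<in> Bs \<Longrightarrow> norm b = 1"
      "independent Bs" "span Bs = span Gs"
    using Bs0 by auto
  have fin: "finite Bs" using Bs(4) independent_imp_finite by blast
  define Q where "Q d = (\<Sum>b\<in>Bs. (b \<bullet> d) *\<^sub>R b)" for d
  have Qb: "b \<bullet> Q d = b \<bullet> d" if b: "b \<in> Bs" for b d
  proof -
    have "b \<bullet> Q d = (\<Sum>b'\<in>Bs. (b' \<bullet> d) * (b \<bullet> b'))" unfolding Q_def by (simp add: inner_sum_right)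
    also have "\<dots> = (\<Sum>b'\<in>Bs. if b' = b then b \<bullet> d else 0)"
    proof (rule sum.cong[OF refl])
      fix b' assume b': "b' \<in> Bs"
      show "(b' \<bullet> d) * (b \<bullet> b') = (if b' = b then b \<bullet> d else 0)"
      proof (cases "b' = b")
        case True
        have "b \<bullet> b = (norm b)^2" by (simp add: power2_norm_eq_inner)
        also have "\<dots> = 1" using Bs(3)[OF b] by simp
        finally show ?thesis using True by simp
      next
        case False
        have "orthogonal b b'" using pairwiseD[OF Bs(2) b b'] False by simp
        hence "b \<bullet> b' = 0" by (simp add: orthogonal_def)
        thus ?thesis using False by simp
      qed
    qed
    also have "\<dots> = b \<bullet> d" using fin b by (simp add: sum.delta)
    finally show ?thesis .
  qed
  have Q_span: "s \<bullet> (d - Q d) = 0" if s: "s \<in> span Gs" for s d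
  proof -
    have "s \<in> span Bs" using s Bs(5) by simp
    thus ?thesis by (rule orth_span[rotated]) (simp add: Qb inner_diff_right)
  qed
  have Q_in: "Q d \<in> span Gs" for d
    unfolding Q_def using Bs(1) by (intro span_sum span_scale) auto
  have gen_perp: "s \<bullet> v = 0" if "\<And>i. i < m \<Longrightarrow> g i x \<bullet> v = 0" "s \<in> span Gs" for s v
    using that(2) by (rule orth_span[rotated]) (auto simp: Gs_def that(1))
  have a_perp: "s \<bullet> a = 0" if "s \<in> span Gs" for s
    using that by (rule gen_perp[rotated]) (use a in \<open>auto simp: Kg_def\<close>)
  define F where "F p = (\<Sum>i<m. h i p *\<^sub>R g i x) + (p - x) - Q (p - x)" for p
  define Fd where "Fd p d = (\<Sum>i<m. (g i p \<bullet> d) *\<^sub>R g i x) + d - Q d" for p d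
  have derF: "(F has_derivative Fd p) (at p)" if p: "p \<in> U" for p
  proof -
    have "\<And>i. i < m \<Longrightarrow> (h i has_derivative (\<lambda>d. g i p \<bullet> d)) (at p)" using dh p by blast
    thus ?thesis unfolding F_def[abs_def] Fd_def[abs_def] Q_def
      by (auto intro!: derivative_eq_intros)
  qed
  have contF: "continuous_on U F"
    by (rule has_derivative_continuous_on[of U F Fd]) (simp add: derF has_derivative_at_withinI)
  define F' where "F' = Fd x"
  have blF': "bounded_linear F'" using derF[OF xU] unfolding F'_def by (rule has_derivative_bounded_linear)
  have linF': "linear F'" using blF' by (simp add: linear_conv_bounded_linear)
  have F'0: "d = 0" if d: "F' d = 0" for d
  proof -
    define s1 where "s1 = (\<Sum>i<m. (g i x \<bullet> d) *\<^sub>R g i x)"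
    have s1span: "s1 \<in> span Gs" unfolding s1_def Gs_def by (intro span_sum span_scale span_base) auto
    have sum0: "s1 + (d - Q d) = 0" using d by (simp add: F'_def Fd_def s1_def algebra_simps)
    have "s1 \<bullet> (d - Q d) = 0" by (rule Q_span[OF s1span])
    moreover have "d - Q d = - s1" using sum0 by (simp add: add_eq_0_iff)
    ultimately have "s1 \<bullet> s1 = 0" by simp
    hence s10: "s1 = 0" by simp
    hence dQ: "d = Q d" using sum0 by simp
    have "s1 \<bullet> d = (\<Sum>i<m. (g i x \<bullet> d)^2)" by (simp add: s1_def inner_sum_left power2_eq_square)
    hence "(\<Sum>i<m. (g i x \<bullet> d)^2) = 0" using s10 by simp
    hence gd: "\<forall>i\<in>{..<m}. (g i x \<bullet> d)^2 = 0" by (subst (asm) sum_nonneg_eq_0_iff) auto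
    have "Q d \<bullet> d = 0" by (rule gen_perp[OF _ Q_in]) (use gd in auto)
    hence "d \<bullet> d = 0" using dQ by simp
    thus ?thesis by simp
  qed
  have injF': "inj F'" using linF' F'0 by (simp add: linear_injective_0)
  obtain Fi where Fi: "linear Fi" "\<And>y. Fi (F' y) = y" "\<And>y. F' (Fi y) = y"
    using eucl.linear_injective_isomorphism[OF linF' injF'] by auto
  have blFi: "bounded_linear Fi" using Fi(1) by (simp add: linear_conv_bounded_linear)
  obtain BL where BL: "BL > 0" "\<And>y. norm (Fi y) \<le> norm y * BL"
    using bounded_linear.pos_bounded[OF blFi] by blast
  have Fx: "F x = 0"
  proof -
    have "x \<in> M \<inter> U" using xM xU by simp
    hence "\<forall>i<m. h i x = 0" using MU by blast
    thus ?thesis by (simp add: F_def Q_def)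
  qed
  have F'a: "F' a = a"
  proof -
    have "\<forall>i<m. g i x \<bullet> a = 0" using a by (simp add: Kg_def)
    moreover have "Q a = 0" unfolding Q_def
      using Bs(1) a_perp by (intro sum.neutral) auto
    ultimately show ?thesis by (simp add: F'_def Fd_def)
  qed
  have keyM: "p \<in> M" if p: "p \<in> U" "F p = t *\<^sub>R a" for p t
  proof -
    define Lh where "Lh = (\<Sum>i<m. h i p *\<^sub>R g i x)"
    have Lspan: "Lh \<in> span Gs" unfolding Lh_def Gs_def by (intro span_sum span_scale span_base) auto
    have Leq: "Lh = t *\<^sub>R a - ((p - x) - Q (p - x))" using p(2) by (simp add: F_def Lh_def algebra_simps)
    have "Lh \<bullet> Lh = Lh \<bullet> (t *\<^sub>R a) - Lh \<bullet> ((p - x) - Q (p - x))"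
      by (subst (2) Leq) (simp add: inner_diff_right)
    also have "\<dots> = 0" using a_perp[OF Lspan] Q_span[OF Lspan] by simp
    finally have "Lh = 0" by simp
    hence "Sg x (\<lambda>i. h i p) = 0" by (simp add: Sg_def Lh_def)
    hence "\<forall>i<m. h i p = 0" using Sg_zero_coef[OF xV] by blast
    thus ?thesis using MU p(1) by blast
  qed
  define r1 where "r1 = r0 - dist u x"
  have r1: "r1 > 0" using xV by (simp add: r1_def)
  have ball_sub: "ball x r1 \<subseteq> ball u r0"
  proof
    fix y assume "y \<in> ball x r1"
    hence "dist x y < r1" by simp
    moreover have "dist u y \<le> dist u x + dist x y" by (rule dist_triangle)
    ultimately show "y \<in> ball u r0" unfolding r1_def by simp
  qed
  have open_map: "\<exists>\<delta>>0. ball 0 \<delta> \<subseteq> F ` ball x r" if r: "r > 0" "r \<le> r1" for r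
  proof -
    have Tsub: "ball x r \<subseteq> U" using subset_ball[OF r(2)] ball_sub VU by blast
    have "F x \<in> interior (F ` ball x r)"
      by (rule sussmann_open_mapping[OF U_open contF xU derF[OF xU] blFi _ Tsub])
         (auto simp: F'_def[symmetric] Fi(3) r(1) o_def fun_eq_iff)
    thus ?thesis using Fx by (simp add: mem_interior)
  qed
  have "\<forall>k. \<exists>tp. 0 < fst tp \<and> fst tp \<le> 1 / Suc k \<and> snd tp \<in> ball x (r1 / Suc k) \<and> F (snd tp) = fst tp *\<^sub>R a"
  proof
    fix k
    have rk: "r1 / Suc k > 0" "r1 / Suc k \<le> r1" using r1 by (auto simp: field_simps)
    obtain \<delta> where \<delta>: "\<delta> > 0" "ball 0 \<delta> \<subseteq> F ` ball x (r1 / Suc k)" using open_map[OF rk] by blast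
    define tt where "tt = min (1 / Suc k) (\<delta> / (norm a + 1))"
    have na: "norm a + 1 > 0" by (smt (verit) norm_ge_zero)
    have tt: "tt > 0" "tt \<le> 1 / Suc k" using \<delta> na by (auto simp: tt_def)
    have "norm (tt *\<^sub>R a) < \<delta>"
    proof -
      have "norm (tt *\<^sub>R a) = tt * norm a" using tt by simp
      also have "\<dots> \<le> (\<delta> / (norm a + 1)) * norm a" unfolding tt_def by (intro mult_right_mono) auto
      also have "\<dots> < \<delta>" using \<delta> na by (simp add: field_simps)
      finally show ?thesis .
    qed
    hence "tt *\<^sub>R a \<in> F ` ball x (r1 / Suc k)" using \<delta>(2) by auto
    then obtain p where "p \<in> ball x (r1 / Suc k)" "F p = tt *\<^sub>R a" by auto
    thus "\<exists>tp. 0 < fst tp \<and> fst tp \<le> 1 / Suc k \<and> snd tp \<in> ball x (r1 / Suc k) \<and> F (snd tp) = fst tp *\<^sub>R a"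
      using tt by (intro exI[of _ "(tt, p)"]) auto
  qed
  from choice[OF this] obtain tp where tp: "\<And>k. 0 < fst (tp k)" "\<And>k. fst (tp k) \<le> 1 / Suc k"
      "\<And>k. snd (tp k) \<in> ball x (r1 / Suc k)" "\<And>k. F (snd (tp k)) = fst (tp k) *\<^sub>R a"
    by blast
  define t where "t k = fst (tp k)" for k
  define p where "p k = snd (tp k)" for k
  have t: "\<And>k. 0 < t k" "\<And>k. t k \<le> 1 / Suc k" using tp(1,2) by (auto simp: t_def)
  have p: "\<And>k. p k \<in> ball x (r1 / Suc k)" "\<And>k. F (p k) = t k *\<^sub>R a" using tp(3,4) by (auto simp: t_def p_def)
  have pV: "p k \<in> ball u r0" for k
  proof -
    have "r1 / Suc k \<le> r1" using r1 by (simp add: field_simps)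
    thus ?thesis using p(1)[of k] ball_sub by (meson subset_ball subsetD)
  qed
  have pM: "p k \<in> M" for k using keyM[OF _ p(2)] pV VU by blast
  have inv1: "(\<lambda>k. 1 / real (Suc k)) \<longlonglongrightarrow> 0" using LIMSEQ_Suc[OF lim_inverse_n'] by simp
  have t0: "t \<longlonglongrightarrow> 0"
  proof (rule tendsto_sandwich[of "\<lambda>k. 0" _ _ "\<lambda>k. 1 / Suc k"])
    show "eventually (\<lambda>k. 0 \<le> t k) sequentially" using t(1) by (simp add: less_imp_le)
    show "eventually (\<lambda>k. t k \<le> 1 / real (Suc k)) sequentially" using t(2) by simp
  qed (use inv1 in auto)
  have px: "(\<lambda>k. norm (p k - x)) \<longlonglongrightarrow> 0"
  proof (rule tendsto_sandwich[of "\<lambda>k. 0" _ _ "\<lambda>k. r1 * (1 / Suc k)"])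
    show "eventually (\<lambda>k. norm (p k - x) \<le> r1 * (1 / real (Suc k))) sequentially"
      using p(1) by (auto simp: dist_norm norm_minus_commute less_imp_le)
    show "(\<lambda>k. r1 * (1 / real (Suc k))) \<longlonglongrightarrow> 0" using tendsto_mult_right_zero[OF inv1] by simp
  qed auto
  define ws where "ws k = (1 / t k) *\<^sub>R (p k - x)" for k
  have xtw: "x + t k *\<^sub>R ws k = p k" for k using t(1)[of k] by (simp add: ws_def)
  have wsa: "ws \<longlonglongrightarrow> a"
  proof (rule tendstoI)
    fix \<epsilon> :: real assume \<epsilon>: "\<epsilon> > 0"
    define e where "e = min (1 / (2 * BL)) (\<epsilon> / (4 * BL * BL * (norm a + 1)))"
    have na: "norm a + 1 > 0" by (smt (verit) norm_ge_zero)
    have e: "e > 0" "e * BL \<le> 1/2" "2 * BL * BL * norm a * e < \<epsilon>"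
    proof -
      show "e > 0" using BL \<epsilon> na by (simp add: e_def)
      have "e \<le> 1 / (2 * BL)" by (simp add: e_def)
      thus "e * BL \<le> 1/2" using BL by (simp add: field_simps)
      have "e \<le> \<epsilon> / (4 * BL * BL * (norm a + 1))" by (simp add: e_def)
      moreover have P: "4 * BL * BL * (norm a + 1) > 0" using BL na by simp
      ultimately have "e * (4 * BL * BL * (norm a + 1)) \<le> \<epsilon>" by (simp add: pos_le_divide_eq[OF P])
      moreover have "2 * BL * BL * norm a * e < e * (4 * BL * BL * (norm a + 1))"
      proof -
        have h: "e * (4 * BL * BL * (norm a + 1)) - 2 * BL * BL * norm a * e = e * (BL * BL) * (2 * norm a + 4)"
          by (simp add: algebra_simps)
        have "2 * norm a + 4 > 0" by (smt (verit) norm_ge_zero)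
        hence "e * (BL * BL) * (2 * norm a + 4) > 0" using BL \<open>e > 0\<close> by simp
        thus ?thesis using h by linarith
      qed
      ultimately show "2 * BL * BL * norm a * e < \<epsilon>" by linarith
    qed
    obtain d where d: "d > 0" "\<And>y. norm (y - x) < d \<Longrightarrow> norm (F y - F x - F' (y - x)) \<le> e * norm (y - x)"
      using derF[OF xU] e(1) unfolding has_derivative_at_alt F'_def by blast
    have evd: "eventually (\<lambda>k. norm (p k - x) < d) sequentially" using px d(1) by (simp add: order_tendstoD(2))
    show "eventually (\<lambda>k. dist (ws k) a < \<epsilon>) sequentially"
      using evd
    proof eventually_elim
      case (elim k)
      define D where "D = p k - x"
      define E where "E = t k *\<^sub>R a - F' D"
      have tk: "t k > 0" by (rule t(1))
      have En: "norm E \<le> e * norm D" using d(2)[OF elim] Fx p(2)[of k] by (simp add: E_def D_def)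
      have "norm D = norm (Fi (F' D))" by (simp add: Fi(2))
      also have "\<dots> \<le> norm (F' D) * BL" by (rule BL(2))
      also have "F' D = t k *\<^sub>R a - E" by (simp add: E_def)
      also have "norm (t k *\<^sub>R a - E) * BL \<le> (t k * norm a + e * norm D) * BL"
        using En tk BL norm_triangle_ineq4[of "t k *\<^sub>R a" E] by (intro mult_right_mono) auto
      finally have "norm D \<le> t k * norm a * BL + (e * BL) * norm D" by (simp add: algebra_simps)
      moreover have "(e * BL) * norm D \<le> (1/2) * norm D" by (rule mult_right_mono[OF e(2) norm_ge_zero])
      ultimately have "norm D \<le> t k * norm a * BL + (1/2) * norm D" by linarith
      moreover have "2 * BL * t k * norm a = 2 * (t k * norm a * BL)" by (simp add: algebra_simps)
      ultimately have Dn: "norm D \<le> 2 * BL * t k * norm a" by linarith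
      have "ws k - a = Fi (F' (ws k) - a)"
      proof -
        have "Fi (F' (ws k) - a) = Fi (F' (ws k)) - Fi a" using Fi(1) by (simp add: linear_diff)
        also have "Fi a = a" using Fi(2)[of a] F'a by simp
        finally show ?thesis by (simp add: Fi(2))
      qed
      also have "F' (ws k) - a = - ((1 / t k) *\<^sub>R E)"
      proof -
        have "F' (ws k) = (1 / t k) *\<^sub>R F' D" by (simp add: ws_def D_def linear_cmul[OF linF'])
        thus ?thesis using tk by (simp add: E_def algebra_simps)
      qed
      finally have wa: "ws k - a = Fi (- ((1 / t k) *\<^sub>R E))" .
      have "norm (ws k - a) \<le> norm (- ((1 / t k) *\<^sub>R E)) * BL" unfolding wa by (rule BL(2))
      also have "\<dots> = (norm E / t k) * BL" using tk by simp
      also have "\<dots> \<le> (e * norm D / t k) * BL" using En tk BL by (intro mult_right_mono divide_right_mono) auto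
      also have "\<dots> \<le> (e * (2 * BL * t k * norm a) / t k) * BL"
        using Dn tk BL e(1) by (intro mult_right_mono divide_right_mono mult_left_mono) auto
      also have "\<dots> = 2 * BL * BL * norm a * e" using tk by (simp add: field_simps)
      also have "\<dots> < \<epsilon>" by (rule e(3))
      finally show ?case by (simp add: dist_norm)
    qed
  qed
  show ?thesis
    using t(1) t0 wsa pV pM xtw by (intro exI[of _ t] exI[of _ ws]) auto
qed

end

context c2mb
begin

lemma hM: assumes "x \<in> M" "x \<in> U" "i < m" shows "h i x = 0"
proof -
  have "x \<in> M \<inter> U" using assms by simp
  hence "x \<in> {x \<in> U. \<forall>i<m. h i x = 0}" by (simp only: MU)
  thus ?thesis using assms(3) by simp
qed

lemma inM: assumes "x \<in> U" "\<forall>i<m. h i x = 0" shows "x \<in> M"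
proof -
  have "x \<in> {x \<in> U. \<forall>i<m. h i x = 0}" using assms by simp
  hence "x \<in> M \<inter> U" by (simp only: MU)
  thus ?thesis by simp
qed

lemma xU_of_V: "x \<in> ball u r0 \<Longrightarrow> x \<in> U" using VU by auto

lemma tangent_sub_K_ev:
  assumes xM: "x \<in> M" and xU: "x \<in> U" and tp: "\<And>k. 0 < t k" and t0: "t \<longlonglongrightarrow> 0"
    and wl: "ws \<longlonglongrightarrow> w" and ev: "eventually (\<lambda>k. x + t k *\<^sub>R ws k \<in> M) sequentially"
  shows "w \<in> Kg x"
  unfolding Kg_def
proof (intro CollectI allI impI)
  fix i assume i: "i < m"
  have hx: "h i x = 0" using hM[OF xM xU i] .
  have lim: "(\<lambda>k. (h i (x + t k *\<^sub>R ws k) - h i x) /\<^sub>R t k) \<longlonglongrightarrow> g i x \<bullet> w"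
    using dq_limit[OF dh[OF i xU] tp t0 wl] .
  have "(\<lambda>k. x + t k *\<^sub>R ws k) \<longlonglongrightarrow> x + 0 *\<^sub>R w" by (intro tendsto_intros t0 wl)
  hence "eventually (\<lambda>k. x + t k *\<^sub>R ws k \<in> U) sequentially"
    using topological_tendstoD[OF _ U_open xU] by simp
  hence "eventually (\<lambda>k. (h i (x + t k *\<^sub>R ws k) - h i x) /\<^sub>R t k = 0) sequentially"
    using ev
  proof eventually_elim
    case (elim k)
    hence "h i (x + t k *\<^sub>R ws k) = 0" using hM i by blast
    thus ?case using hx by simp
  qed
  hence "(\<lambda>k. 0) \<longlonglongrightarrow> g i x \<bullet> w"
    by (rule Lim_transform_eventually[OF lim])
  from LIMSEQ_unique[OF tendsto_const this] show "g i x \<bullet> w = 0" by simp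
qed

lemma tangent_sub_K:
  assumes "x \<in> M" "x \<in> U" "w \<in> tangent_cone M x"
  shows "w \<in> Kg x"
proof -
  obtain t ws where tt: "\<And>k. 0 < t k" "t \<longlonglongrightarrow> 0" "ws \<longlonglongrightarrow> w" "\<And>k. x + t k *\<^sub>R ws k \<in> M"
    using assms(3) unfolding tangent_cone_def by blast
  show ?thesis by (rule tangent_sub_K_ev[OF assms(1,2) tt(1-3)]) (simp add: tt(4))
qed

lemma K_in_T:
  assumes "x \<in> M" "x \<in> ball u r0" "a \<in> Kg x"
  shows "a \<in> tangent_cone M x"
  using K_sub_tangent[OF assms] unfolding tangent_cone_def by blast

lemma normal_map_eq:
  assumes xM: "x \<in> M" and xV: "x \<in> ball u r0"
  shows "normal_map M x = range (Sg x)"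
proof
  show "normal_map M x \<subseteq> range (Sg x)"
  proof
    fix v assume "v \<in> normal_map M x"
    hence v: "\<And>w. w \<in> tangent_cone M x \<Longrightarrow> v \<bullet> w = 0" using xM by (simp add: normal_map_def)
    have "\<exists>c. v = Sg x c" by (rule perp_K_Sg) (use v K_in_T[OF xM xV] in blast)
    thus "v \<in> range (Sg x)" by blast
  qed
  show "range (Sg x) \<subseteq> normal_map M x"
  proof
    fix v assume "v \<in> range (Sg x)"
    then obtain c where c: "v = Sg x c" by blast
    have "\<forall>w\<in>tangent_cone M x. v \<bullet> w = 0"
      using tangent_sub_K[OF xM xU_of_V[OF xV]] Sg_inner_K c by blast
    thus "v \<in> normal_map M x" using xM by (simp add: normal_map_def)
  qed
qed

lemma graph_mem:
  assumes xV: "x \<in> ball u r0"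
  shows "(x, y) \<in> graph_of (normal_map M) \<longleftrightarrow> x \<in> M \<and> (\<exists>c. y = Sg x c)"
proof (cases "x \<in> M")
  case True
  thus ?thesis using normal_map_eq[OF True xV] by (auto simp: graph_of_def)
next
  case False
  thus ?thesis by (simp add: graph_of_def normal_map_def)
qed

lemma Sg_deriv: "x \<in> U \<Longrightarrow> ((\<lambda>y. Sg y c) has_derivative Hg x c) (at x)"
  unfolding Sg_def[abs_def] Hg_def[abs_def]
  by (intro has_derivative_sum has_derivative_scaleR_right dg) auto

lemma Sg_cont: "x \<in> U \<Longrightarrow> isCont (\<lambda>y. Sg y c) x"
  using Sg_deriv has_derivative_continuous by blast

lemma limit_perp:
  assumes x: "x \<in> ball u r0" and xs: "xs \<longlonglongrightarrow> x" and ev: "eventually (\<lambda>k. xs k \<in> ball u r0) sequentially"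
    and lim: "(\<lambda>k. Sg (xs k) (dd k)) \<longlonglongrightarrow> \<zeta>"
  shows "\<exists>\<mu>. \<zeta> = Sg x \<mu>"
proof (rule perp_K_Sg)
  fix e assume e: "e \<in> Kg x"
  have xU: "x \<in> U" using x VU by auto
  define B where "B = norm \<zeta> + 1"
  have evB: "eventually (\<lambda>k. norm (Sg (xs k) (dd k)) < B) sequentially"
    using tendsto_norm[OF lim] unfolding B_def by (simp add: order_tendstoD(2))
  define \<gamma> where "\<gamma> k = (\<Sum>j<m. norm (g j (xs k) - g j x))" for k
  have \<gamma>0: "\<gamma> \<longlonglongrightarrow> 0"
    unfolding \<gamma>_def
  proof (rule tendsto_null_sum)
    fix j assume "j \<in> {..<m}"
    hence "isCont (g j) x" using g_cont xU by simp
    hence "(\<lambda>k. g j (xs k)) \<longlonglongrightarrow> g j x" using isCont_tendsto_compose xs by blast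
    hence "(\<lambda>k. g j (xs k) - g j x) \<longlonglongrightarrow> 0" using LIM_zero by blast
    thus "(\<lambda>k. norm (g j (xs k) - g j x)) \<longlonglongrightarrow> 0" using tendsto_norm_zero by blast
  qed
  have bound: "eventually (\<lambda>k. norm (Sg (xs k) (dd k) \<bullet> e) \<le> (Cb * B * norm e) * \<gamma> k) sequentially"
    using evB ev
  proof eventually_elim
    case (elim k)
    have ge: "g i x \<bullet> e = 0" if "i < m" for i using e that by (simp add: Kg_def)
    have "Sg (xs k) (dd k) \<bullet> e = (\<Sum>i<m. dd k i * ((g i (xs k) - g i x) \<bullet> e))"
      unfolding Sg_def inner_sum_left by (intro sum.cong refl) (simp add: inner_diff_left ge)
    hence "norm (Sg (xs k) (dd k) \<bullet> e) = \<bar>\<Sum>i<m. dd k i * ((g i (xs k) - g i x) \<bullet> e)\<bar>" by simp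
    also have "\<dots> \<le> (\<Sum>i<m. \<bar>dd k i * ((g i (xs k) - g i x) \<bullet> e)\<bar>)" by (rule sum_abs)
    also have "\<dots> \<le> (\<Sum>i<m. \<bar>dd k i\<bar> * (norm (g i (xs k) - g i x) * norm e))"
    proof (rule sum_mono)
      fix i assume "i \<in> {..<m}"
      have "\<bar>(g i (xs k) - g i x) \<bullet> e\<bar> \<le> norm (g i (xs k) - g i x) * norm e" by (rule Cauchy_Schwarz_ineq2)
      thus "\<bar>dd k i * ((g i (xs k) - g i x) \<bullet> e)\<bar> \<le> \<bar>dd k i\<bar> * (norm (g i (xs k) - g i x) * norm e)"
        by (simp add: abs_mult mult_left_mono)
    qed
    also have "\<dots> \<le> (\<Sum>i<m. \<bar>dd k i\<bar> * (\<gamma> k * norm e))"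
    proof (rule sum_mono)
      fix i assume i: "i \<in> {..<m}"
      have "norm (g i (xs k) - g i x) \<le> \<gamma> k"
        unfolding \<gamma>_def using i by (intro member_le_sum) auto
      thus "\<bar>dd k i\<bar> * (norm (g i (xs k) - g i x) * norm e) \<le> \<bar>dd k i\<bar> * (\<gamma> k * norm e)"
        by (intro mult_left_mono mult_right_mono) auto
    qed
    also have "\<dots> = (\<Sum>i<m. \<bar>dd k i\<bar>) * (\<gamma> k * norm e)" by (simp add: sum_distrib_right)
    also have "\<dots> \<le> (Cb * B) * (\<gamma> k * norm e)"
    proof (rule mult_right_mono)
      have "(\<Sum>i<m. \<bar>dd k i\<bar>) \<le> Cb * norm (Sg (xs k) (dd k))" by (rule bnd[OF elim(2)])
      also have "\<dots> \<le> Cb * B" using elim(1) Cb by simp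
      finally show "(\<Sum>i<m. \<bar>dd k i\<bar>) \<le> Cb * B" .
      show "0 \<le> \<gamma> k * norm e" unfolding \<gamma>_def by (simp add: sum_nonneg)
    qed
    finally show ?case by (simp add: mult_ac)
  qed
  have "(\<lambda>k. (Cb * B * norm e) * \<gamma> k) \<longlonglongrightarrow> 0"
    using tendsto_mult_right_zero[OF \<gamma>0] by simp
  hence l0: "(\<lambda>k. Sg (xs k) (dd k) \<bullet> e) \<longlonglongrightarrow> 0" by (rule Lim_null_comparison[OF bound])
  have l1: "(\<lambda>k. Sg (xs k) (dd k) \<bullet> e) \<longlonglongrightarrow> \<zeta> \<bullet> e" by (intro tendsto_intros lim)
  show "\<zeta> \<bullet> e = 0" using LIMSEQ_unique[OF l1 l0] .
qed

end

context c2mb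
begin

lemma H_sym: assumes i: "i < m" and xU: "x \<in> U" shows "H i x a \<bullet> b = H i x b \<bullet> a"
proof -
  have "H i x a \<bullet> b = H i x b \<bullet> a"
    by (rule hessian_symmetric[OF U_open xU, of "h i" "g i" "H i x" a b]) (use dh[OF i] dg[OF i xU] in auto)
  thus ?thesis .
qed

lemma Hg_sym: assumes xU: "x \<in> U" shows "Hg x c a \<bullet> b = Hg x c b \<bullet> a"
  unfolding Hg_def inner_sum_left
  by (intro sum.cong refl) (simp add: H_sym[OF _ xU])

lemma Hg_lin: "x \<in> U \<Longrightarrow> bounded_linear (Hg x c)"
  using Sg_deriv has_derivative_bounded_linear by blast

lemma TG_sup:
  assumes xM: "x \<in> M" and xV: "x \<in> ball u r0" and w: "w \<in> Kg x"
  shows "(w, Hg x c w + Sg x \<mu>) \<in> tangent_cone (graph_of (normal_map M)) (x, Sg x c)"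
proof -
  have xU: "x \<in> U" using xU_of_V[OF xV] .
  obtain t ws where tp: "\<And>k. 0 < t k" and t0: "t \<longlonglongrightarrow> 0" and wl: "ws \<longlonglongrightarrow> w"
    and mem: "\<And>k. x + t k *\<^sub>R ws k \<in> M \<inter> ball u r0"
    using K_sub_tangent[OF xM xV w] by blast
  define xs where "xs k = x + t k *\<^sub>R ws k" for k
  define zs where "zs k = (Sg (xs k) c - Sg x c) /\<^sub>R t k + Sg (xs k) \<mu>" for k
  have lim1: "(\<lambda>k. (Sg (x + t k *\<^sub>R ws k) c - Sg x c) /\<^sub>R t k) \<longlonglongrightarrow> Hg x c w"
    using dq_limit[OF Sg_deriv[OF xU] tp t0 wl] .
  have xsl: "xs \<longlonglongrightarrow> x"
  proof -
    have "(\<lambda>k. x + t k *\<^sub>R ws k) \<longlonglongrightarrow> x + 0 *\<^sub>R w" by (intro tendsto_intros t0 wl)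
    thus ?thesis by (simp add: xs_def[abs_def])
  qed
  have lim2: "(\<lambda>k. Sg (xs k) \<mu>) \<longlonglongrightarrow> Sg x \<mu>"
    using isCont_tendsto_compose[OF Sg_cont[OF xU] xsl] .
  have zsl: "zs \<longlonglongrightarrow> Hg x c w + Sg x \<mu>"
    unfolding zs_def xs_def using tendsto_add[OF lim1 lim2[unfolded xs_def]] .
  show ?thesis
    unfolding tangent_cone_def
  proof (intro CollectI exI conjI allI)
    show "\<And>k. 0 < t k" by (rule tp)
    show "t \<longlonglongrightarrow> 0" by (rule t0)
    show "(\<lambda>k. (ws k, zs k)) \<longlonglongrightarrow> (w, Hg x c w + Sg x \<mu>)" by (intro tendsto_Pair wl zsl)
    fix k
    have tk: "t k \<noteq> 0" using tp[of k] by simp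
    have "Sg x c + t k *\<^sub>R zs k = Sg (xs k) c + t k *\<^sub>R Sg (xs k) \<mu>"
      using tk by (simp add: zs_def algebra_simps)
    also have "\<dots> = Sg (xs k) (\<lambda>i. c i + t k * \<mu> i)" by (simp add: Sg_scale Sg_add)
    finally have eq: "(x, Sg x c) + t k *\<^sub>R (ws k, zs k) = (xs k, Sg (xs k) (\<lambda>i. c i + t k * \<mu> i))"
      by (simp add: xs_def)
    have "xs k \<in> M" "xs k \<in> ball u r0" using mem[of k] by (auto simp: xs_def)
    hence "(xs k, Sg (xs k) (\<lambda>i. c i + t k * \<mu> i)) \<in> graph_of (normal_map M)"
      using graph_mem by blast
    thus "(x, Sg x c) + t k *\<^sub>R (ws k, zs k) \<in> graph_of (normal_map M)" by (simp only: eq)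
  qed
qed

lemma TG_sub:
  assumes xM: "x \<in> M" and xV: "x \<in> ball u r0"
    and wz: "(w, z) \<in> tangent_cone (graph_of (normal_map M)) (x, Sg x c)"
  shows "w \<in> Kg x \<and> (\<exists>\<mu>. z = Hg x c w + Sg x \<mu>)"
proof -
  have xU: "x \<in> U" using xU_of_V[OF xV] .
  obtain t ps where tp: "\<And>k. 0 < t k" and t0: "t \<longlonglongrightarrow> 0" and psl: "ps \<longlonglongrightarrow> (w, z)"
    and mem: "\<And>k. (x, Sg x c) + t k *\<^sub>R ps k \<in> graph_of (normal_map M)"
    using wz unfolding tangent_cone_def by blast
  define ws where "ws k = fst (ps k)" for k
  define zs where "zs k = snd (ps k)" for k
  have wl: "ws \<longlonglongrightarrow> w" using tendsto_fst[OF psl] by (simp add: ws_def[abs_def])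
  have zl: "zs \<longlonglongrightarrow> z" using tendsto_snd[OF psl] by (simp add: zs_def[abs_def])
  define xs where "xs k = x + t k *\<^sub>R ws k" for k
  have mem': "(xs k, Sg x c + t k *\<^sub>R zs k) \<in> graph_of (normal_map M)" for k
  proof -
    have "(x, Sg x c) + t k *\<^sub>R ps k = (xs k, Sg x c + t k *\<^sub>R zs k)"
      by (simp add: xs_def ws_def zs_def prod_eq_iff)
    thus ?thesis using mem[of k] by simp
  qed
  have xsl: "xs \<longlonglongrightarrow> x"
  proof -
    have "(\<lambda>k. x + t k *\<^sub>R ws k) \<longlonglongrightarrow> x + 0 *\<^sub>R w" by (intro tendsto_intros t0 wl)
    thus ?thesis by (simp add: xs_def[abs_def])
  qed
  have evV: "eventually (\<lambda>k. xs k \<in> ball u r0) sequentially"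
    using topological_tendstoD[OF xsl open_ball xV] .
  have evG: "eventually (\<lambda>k. xs k \<in> M \<and> (\<exists>c'. Sg x c + t k *\<^sub>R zs k = Sg (xs k) c')) sequentially"
    using evV
  proof eventually_elim
    case (elim k)
    thus ?case using mem'[of k] graph_mem[OF elim] by blast
  qed
  have evM: "eventually (\<lambda>k. x + t k *\<^sub>R ws k \<in> M) sequentially"
    using evG by eventually_elim (simp add: xs_def)
  have wK: "w \<in> Kg x" by (rule tangent_sub_K_ev[OF xM xU tp t0 wl evM])
  define cc where "cc k = (SOME c'. Sg x c + t k *\<^sub>R zs k = Sg (xs k) c')" for k
  define dd where "dd k = (\<lambda>i. inverse (t k) * (cc k i - c i))" for k
  have lim1: "(\<lambda>k. (Sg (x + t k *\<^sub>R ws k) c - Sg x c) /\<^sub>R t k) \<longlonglongrightarrow> Hg x c w"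
    using dq_limit[OF Sg_deriv[OF xU] tp t0 wl] .
  have limz: "(\<lambda>k. zs k - (Sg (xs k) c - Sg x c) /\<^sub>R t k) \<longlonglongrightarrow> z - Hg x c w"
    unfolding xs_def using tendsto_diff[OF zl lim1] .
  have eveq: "eventually (\<lambda>k. zs k - (Sg (xs k) c - Sg x c) /\<^sub>R t k = Sg (xs k) (dd k)) sequentially"
    using evG
  proof eventually_elim
    case (elim k)
    hence ccd: "Sg x c + t k *\<^sub>R zs k = Sg (xs k) (cc k)" unfolding cc_def by (metis (mono_tags) someI_ex)
    have tk: "t k \<noteq> 0" using tp[of k] by simp
    have "Sg (xs k) (dd k) = inverse (t k) *\<^sub>R (Sg (xs k) (cc k) - Sg (xs k) c)"
      by (simp add: dd_def Sg_scale Sg_diff)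
    also have "\<dots> = inverse (t k) *\<^sub>R (Sg x c + t k *\<^sub>R zs k - Sg (xs k) c)" by (simp only: ccd)
    also have "\<dots> = zs k - (Sg (xs k) c - Sg x c) /\<^sub>R t k"
      using tk by (simp add: algebra_simps)
    finally show ?case by simp
  qed
  have "(\<lambda>k. Sg (xs k) (dd k)) \<longlonglongrightarrow> z - Hg x c w"
    by (rule Lim_transform_eventually[OF limz eveq])
  then obtain \<mu> where "z - Hg x c w = Sg x \<mu>" using limit_perp[OF xV xsl evV] by blast
  hence "z = Hg x c w + Sg x \<mu>" by (simp add: algebra_simps)
  thus ?thesis using wK by blast
qed

end

context c2mb
begin

lemma uV: "u \<in> ball u r0" using r0 by simp

lemma e_vec: "i < m \<Longrightarrow> Sg x (\<lambda>j. if j = i then 1 else 0) = g i x"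
proof -
  assume i: "i < m"
  have "Sg x (\<lambda>j. if j = i then 1 else 0) = (\<Sum>j<m. (if j = i then g j x else 0))"
    unfolding Sg_def by (rule sum.cong) auto
  also have "\<dots> = g i x" using i by (simp add: sum.delta)
  finally show ?thesis .
qed

lemma normal_orth:
  assumes xM: "x \<in> M" and xV: "x \<in> ball u r0"
    and n: "(\<alpha>, \<beta>) \<in> regular_normal_cone (graph_of (normal_map M)) (x, Sg x c)"
    and a: "a \<in> Kg x"
  shows "\<alpha> \<bullet> a + \<beta> \<bullet> (Hg x c a + Sg x \<nu>) = 0"
proof -
  have xU: "x \<in> U" using xU_of_V[OF xV] .
  have bl: "bounded_linear (Hg x c)" by (rule Hg_lin[OF xU])
  have na: "- a \<in> Kg x" using a by (simp add: Kg_def)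
  have t1: "(a, Hg x c a + Sg x \<nu>) \<in> tangent_cone (graph_of (normal_map M)) (x, Sg x c)"
    by (rule TG_sup[OF xM xV a])
  have t2: "(- a, Hg x c (- a) + Sg x (\<lambda>i. - \<nu> i)) \<in> tangent_cone (graph_of (normal_map M)) (x, Sg x c)"
    by (rule TG_sup[OF xM xV na])
  have eq2: "(- a, Hg x c (- a) + Sg x (\<lambda>i. - \<nu> i)) = - (a, Hg x c a + Sg x \<nu>)"
    using Sg_scale[of "-1" x \<nu>] by (simp add: linear_simps(4)[OF bl])
  have i1: "(\<alpha>, \<beta>) \<bullet> (a, Hg x c a + Sg x \<nu>) \<le> 0" by (rule regular_normal_polar1[OF n t1])
  have i2: "(\<alpha>, \<beta>) \<bullet> (- (a, Hg x c a + Sg x \<nu>)) \<le> 0" using regular_normal_polar1[OF n t2] eq2 by simp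
  have i2': "- ((\<alpha>, \<beta>) \<bullet> (a, Hg x c a + Sg x \<nu>)) \<le> 0" using i2 by (simp only: inner_minus_right)
  have "(\<alpha>, \<beta>) \<bullet> (a, Hg x c a + Sg x \<nu>) = 0" using i1 i2' by linarith
  thus ?thesis by (simp add: inner_Pair)
qed

lemma main:
  assumes v: "v \<in> normal_map M u"
  shows "graphical_derivative (normal_map M) u v = coderivative (normal_map M) u v"
proof -
  obtain lam where vlam: "v = Sg u lam" using v normal_map_eq[OF uM uV] by blast
  define Gr where "Gr = graph_of (normal_map M)"
  have PG: "(u, v) \<in> Gr" unfolding Gr_def vlam using graph_mem[OF uV] uM by blast
  have blu: "bounded_linear (Hg u lam)" by (rule Hg_lin[OF uU])
  show ?thesis
  proof (intro ext set_eqI iffI)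
    fix w z assume "z \<in> graphical_derivative (normal_map M) u v w"
    hence wz: "(w, z) \<in> tangent_cone Gr (u, Sg u lam)" by (simp add: graphical_derivative_def Gr_def vlam)
    obtain \<mu> where wK: "w \<in> Kg u" and z: "z = Hg u lam w + Sg u \<mu>"
      using TG_sub[OF uM uV wz[unfolded Gr_def]] by blast
    have reg: "(z, - w) \<in> regular_normal_cone Gr (u, v)"
    proof (rule regular_normal_polar2[OF PG])
      fix \<tau> assume \<tau>: "\<tau> \<in> tangent_cone Gr (u, v)"
      obtain a b where ab: "\<tau> = (a, b)" by (cases \<tau>)
      have "(a, b) \<in> tangent_cone (graph_of (normal_map M)) (u, Sg u lam)" using \<tau> ab by (simp add: Gr_def vlam)
      then obtain \<nu> where aK: "a \<in> Kg u" and b: "b = Hg u lam a + Sg u \<nu>"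
        using TG_sub[OF uM uV] by blast
      have "(z, - w) \<bullet> \<tau> = Hg u lam w \<bullet> a + Sg u \<mu> \<bullet> a - w \<bullet> Hg u lam a - w \<bullet> Sg u \<nu>"
        by (simp add: ab z b inner_Pair inner_add_left inner_add_right)
      moreover have "Sg u \<mu> \<bullet> a = 0" by (rule Sg_inner_K[OF aK])
      moreover have "w \<bullet> Sg u \<nu> = 0" using Sg_inner_K[OF wK, of \<nu>] by (simp add: inner_commute)
      moreover have "Hg u lam w \<bullet> a = w \<bullet> Hg u lam a" using Hg_sym[OF uU, of lam w a] by (simp add: inner_commute)
      ultimately show "(z, - w) \<bullet> \<tau> \<le> 0" by linarith
    qed
    have "(z, - w) \<in> limiting_normal_cone Gr (u, v)"
      unfolding limiting_normal_cone_def using PG reg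
      by (intro if_P[THEN ssubst[of _ _ "\<lambda>X. (z, - w) \<in> X"]] CollectI exI[of _ "\<lambda>k. (u, v)"] exI[of _ "\<lambda>k. (z, - w)"]) auto
    thus "z \<in> coderivative (normal_map M) u v w" by (simp add: coderivative_def Gr_def)
  next
    fix w z assume "z \<in> coderivative (normal_map M) u v w"
    hence lim: "(z, - w) \<in> limiting_normal_cone Gr (u, v)" by (simp add: coderivative_def Gr_def)
    obtain Q n where QG: "\<And>k. Q k \<in> Gr" and Ql: "Q \<longlonglongrightarrow> (u, v)" and nl: "n \<longlonglongrightarrow> (z, - w)"
      and nreg: "\<And>k. n k \<in> regular_normal_cone Gr (Q k)"
      using lim PG unfolding limiting_normal_cone_def by auto
    define xs where "xs k = fst (Q k)" for k
    define ys where "ys k = snd (Q k)" for k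
    define al where "al k = fst (n k)" for k
    define be where "be k = snd (n k)" for k
    have Qk: "Q k = (xs k, ys k)" for k by (simp add: xs_def ys_def)
    have nk: "n k = (al k, be k)" for k by (simp add: al_def be_def)
    have xsl: "xs \<longlonglongrightarrow> u" using tendsto_fst[OF Ql] by (simp add: xs_def[abs_def])
    have ysl: "ys \<longlonglongrightarrow> v" using tendsto_snd[OF Ql] by (simp add: ys_def[abs_def])
    have all: "al \<longlonglongrightarrow> z" using tendsto_fst[OF nl] by (simp add: al_def[abs_def])
    have bel: "be \<longlonglongrightarrow> - w" using tendsto_snd[OF nl] by (simp add: be_def[abs_def])
    have evV: "eventually (\<lambda>k. xs k \<in> ball u r0) sequentially"
      using topological_tendstoD[OF xsl open_ball uV] .
    define cc where "cc k = (SOME c'. ys k = Sg (xs k) c')" for k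
    have evC: "eventually (\<lambda>k. xs k \<in> M \<and> xs k \<in> ball u r0 \<and> xs k \<in> U \<and> ys k = Sg (xs k) (cc k)) sequentially"
      using evV
    proof eventually_elim
      case (elim k)
      have "(xs k, ys k) \<in> graph_of (normal_map M)" using QG[of k] by (simp add: Qk Gr_def)
      hence "xs k \<in> M \<and> (\<exists>c'. ys k = Sg (xs k) c')" using graph_mem[OF elim] by blast
      hence h: "xs k \<in> M" "\<exists>c'. ys k = Sg (xs k) c'" by blast+
      have "ys k = Sg (xs k) (cc k)" unfolding cc_def by (rule someI_ex[OF h(2)])
      note h(1) this
      thus ?case using elim xU_of_V[OF elim] by blast
    qed
    have evO: "eventually (\<lambda>k. \<forall>a \<nu>. a \<in> Kg (xs k) \<longrightarrow>
        al k \<bullet> a + be k \<bullet> (Hg (xs k) (cc k) a + Sg (xs k) \<nu>) = 0) sequentially"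
      using evC
    proof eventually_elim
      case (elim k)
      have "(al k, be k) \<in> regular_normal_cone (graph_of (normal_map M)) (xs k, Sg (xs k) (cc k))"
        using nreg[of k] elim by (simp add: nk Qk Gr_def)
      thus ?case using normal_orth[of "xs k" "al k" "be k" "cc k"] elim by blast
    qed
    have wK: "w \<in> Kg u"
      unfolding Kg_def
    proof (intro CollectI allI impI)
      fix i assume i: "i < m"
      have evA: "eventually (\<lambda>k. be k \<bullet> g i (xs k) = 0) sequentially"
        using evO evC
      proof eventually_elim
        case (elim k)
        have z0: "(0::'a) \<in> Kg (xs k)" by (simp add: Kg_def)
        have bl: "bounded_linear (Hg (xs k) (cc k))" using Hg_lin elim(2) by blast
        have "al k \<bullet> 0 + be k \<bullet> (Hg (xs k) (cc k) 0 + Sg (xs k) (\<lambda>j. if j = i then 1 else 0)) = 0"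
          using elim(1) z0 by blast
        thus ?case using e_vec[OF i] linear_simps(3)[OF bl] by simp
      qed
      have limA: "(\<lambda>k. be k \<bullet> g i (xs k)) \<longlonglongrightarrow> (- w) \<bullet> g i u"
        by (intro tendsto_inner bel isCont_tendsto_compose[OF g_cont[OF i uU] xsl])
      have "(\<lambda>k. 0) \<longlonglongrightarrow> (- w) \<bullet> g i u" by (rule Lim_transform_eventually[OF limA evA])
      from LIMSEQ_unique[OF tendsto_const this] show "g i u \<bullet> w = 0" by (simp add: inner_commute)
    qed
    define \<rho> where "\<rho> k = (SOME \<rho>'. al k + Hg (xs k) (cc k) (be k) = Sg (xs k) \<rho>')" for k
    have evB: "eventually (\<lambda>k. al k + Hg (xs k) (cc k) (be k) = Sg (xs k) (\<rho> k)) sequentially"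
      using evO evC
    proof eventually_elim
      case (elim k)
      have "\<exists>\<rho>'. al k + Hg (xs k) (cc k) (be k) = Sg (xs k) \<rho>'"
      proof (rule perp_K_Sg)
        fix a assume a: "a \<in> Kg (xs k)"
        have "al k \<bullet> a + be k \<bullet> (Hg (xs k) (cc k) a + Sg (xs k) (\<lambda>i. 0)) = 0" using elim(1) a by blast
        hence "al k \<bullet> a + be k \<bullet> Hg (xs k) (cc k) a = 0" by (simp add: Sg_zero)
        moreover have "Hg (xs k) (cc k) (be k) \<bullet> a = be k \<bullet> Hg (xs k) (cc k) a"
          using Hg_sym[of "xs k" "cc k" "be k" a] elim(2) by (simp add: inner_commute)
        ultimately show "(al k + Hg (xs k) (cc k) (be k)) \<bullet> a = 0" by (simp add: inner_add_left)
      qed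
      thus ?case unfolding \<rho>_def by (rule someI_ex)
    qed
    have ccl: "(\<lambda>k. cc k i) \<longlonglongrightarrow> lam i" if i: "i < m" for i
    proof -
      have limD: "(\<lambda>k. ys k - Sg (xs k) lam) \<longlonglongrightarrow> v - Sg u lam"
        by (intro tendsto_diff ysl isCont_tendsto_compose[OF Sg_cont[OF uU] xsl])
      have evD: "eventually (\<lambda>k. ys k - Sg (xs k) lam = Sg (xs k) (\<lambda>j. cc k j - lam j)) sequentially"
        using evC by eventually_elim (simp add: Sg_diff)
      have "(\<lambda>k. Sg (xs k) (\<lambda>j. cc k j - lam j)) \<longlonglongrightarrow> 0"
        using Lim_transform_eventually[OF limD evD] vlam by simp
      hence n0: "(\<lambda>k. Cb * norm (Sg (xs k) (\<lambda>j. cc k j - lam j))) \<longlonglongrightarrow> 0"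
        using tendsto_mult_right_zero[OF tendsto_norm_zero] by blast
      have evE: "eventually (\<lambda>k. norm (cc k i - lam i) \<le> Cb * norm (Sg (xs k) (\<lambda>j. cc k j - lam j))) sequentially"
        using evV
      proof eventually_elim
        case (elim k)
        have "norm (cc k i - lam i) \<le> (\<Sum>j<m. \<bar>cc k j - lam j\<bar>)"
          using i by (simp only: real_norm_def) (rule member_le_sum[where f="\<lambda>j. \<bar>cc k j - lam j\<bar>"], auto)
        also have "\<dots> \<le> Cb * norm (Sg (xs k) (\<lambda>j. cc k j - lam j))" by (rule bnd[OF elim])
        finally show ?case .
      qed
      have "(\<lambda>k. cc k i - lam i) \<longlonglongrightarrow> 0" by (rule Lim_null_comparison[OF evE n0])
      thus ?thesis by (rule LIM_zero_cancel)
    qed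
    have repr: "H i x y = (\<Sum>b\<in>Basis. (y \<bullet> b) *\<^sub>R H i x b)" if "i < m" "x \<in> U" for i x y
    proof -
      have bl: "bounded_linear (H i x)" by (rule H_lin[OF that])
      have "H i x y = H i x (\<Sum>b\<in>Basis. (y \<bullet> b) *\<^sub>R b)" by (simp add: euclidean_representation)
      also have "\<dots> = (\<Sum>b\<in>Basis. (y \<bullet> b) *\<^sub>R H i x b)"
        using bl by (simp add: linear_sum linear_cmul linear_conv_bounded_linear[symmetric])
      finally show ?thesis .
    qed
    have Hl: "(\<lambda>k. H i (xs k) (be k)) \<longlonglongrightarrow> H i u (- w)" if i: "i < m" for i
    proof -
      have evU: "eventually (\<lambda>k. xs k \<in> U) sequentially" using evC by eventually_elim blast
      have "(\<lambda>k. \<Sum>b\<in>Basis. (be k \<bullet> b) *\<^sub>R H i (xs k) b) \<longlonglongrightarrow> (\<Sum>b\<in>Basis. ((- w) \<bullet> b) *\<^sub>R H i u b)"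
      proof (rule tendsto_sum)
        fix b :: 'a assume "b \<in> Basis"
        have l1: "(\<lambda>k. be k \<bullet> b) \<longlonglongrightarrow> (- w) \<bullet> b" by (rule tendsto_inner[OF bel tendsto_const])
        have l2: "(\<lambda>k. H i (xs k) b) \<longlonglongrightarrow> H i u b"
          by (rule continuous_on_tendsto_compose[OF Hc[OF i] xsl uU evU])
        show "(\<lambda>k. (be k \<bullet> b) *\<^sub>R H i (xs k) b) \<longlonglongrightarrow> ((- w) \<bullet> b) *\<^sub>R H i u b"
          by (rule tendsto_scaleR[OF l1 l2])
      qed
      moreover have eqr: "H i u (- w) = (\<Sum>b\<in>Basis. ((- w) \<bullet> b) *\<^sub>R H i u b)" by (rule repr[OF i uU])
      ultimately have l: "(\<lambda>k. \<Sum>b\<in>Basis. (be k \<bullet> b) *\<^sub>R H i (xs k) b) \<longlonglongrightarrow> H i u (- w)"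
        by (simp only: eqr)
      have "eventually (\<lambda>k. (\<Sum>b\<in>Basis. (be k \<bullet> b) *\<^sub>R H i (xs k) b) = H i (xs k) (be k)) sequentially"
        using evU by eventually_elim (rule repr[OF i, symmetric])
      thus ?thesis by (rule Lim_transform_eventually[OF l])
    qed
    have Hgl: "(\<lambda>k. Hg (xs k) (cc k) (be k)) \<longlonglongrightarrow> Hg u lam (- w)"
      unfolding Hg_def
    proof (rule tendsto_sum)
      fix i assume "i \<in> {..<m}"
      hence i: "i < m" by simp
      show "(\<lambda>k. cc k i *\<^sub>R H i (xs k) (be k)) \<longlonglongrightarrow> lam i *\<^sub>R H i u (- w)"
        by (rule tendsto_scaleR[OF ccl[OF i] Hl[OF i]])
    qed
    have limS0: "(\<lambda>k. al k + Hg (xs k) (cc k) (be k)) \<longlonglongrightarrow> z + Hg u lam (- w)"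
      by (intro tendsto_add all Hgl)
    have limS: "(\<lambda>k. Sg (xs k) (\<rho> k)) \<longlonglongrightarrow> z + Hg u lam (- w)"
      by (rule Lim_transform_eventually[OF limS0 evB])
    obtain \<mu> where "z + Hg u lam (- w) = Sg u \<mu>" using limit_perp[OF uV xsl evV limS] by blast
    hence zeq: "z = Hg u lam w + Sg u \<mu>" using linear_simps(4)[OF blu] by (simp add: algebra_simps)
    have "(w, z) \<in> tangent_cone (graph_of (normal_map M)) (u, Sg u lam)"
      unfolding zeq by (rule TG_sup[OF uM uV wK])
    thus "z \<in> graphical_derivative (normal_map M) u v w" by (simp add: graphical_derivative_def vlam)
  qed
qed

end

theorem theorem6p1:
  fixes M :: "'a::euclidean_space set" and u v :: 'a
  assumes "C2_manifold_around M u"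
    and "v \<in> normal_map M u"
  shows "graphical_derivative (normal_map M) u v = coderivative (normal_map M) u v"
proof -
  obtain U :: "'a set" and m :: nat and h :: "nat \<Rightarrow> 'a \<Rightarrow> real" and g :: "nat \<Rightarrow> 'a \<Rightarrow> 'a"
    and H :: "nat \<Rightarrow> 'a \<Rightarrow> 'a \<Rightarrow> 'a" where uM: "u \<in> M" and oU: "open U" and uU: "u \<in> U"
    and d: "\<forall>i<m. \<forall>x\<in>U. (h i has_derivative (\<lambda>d. inner (g i x) d)) (at x) \<and>
                        (g i has_derivative H i x) (at x)"
    and Hc: "\<forall>i<m. \<forall>d. continuous_on U (\<lambda>x. H i x d)"
    and MU: "M \<inter> U = {x \<in> U. \<forall>i<m. h i x = 0}"
    and inj: "inj_on (\<lambda>i. g i u) {..<m}" and ind: "independent ((\<lambda>i. g i u) ` {..<m})"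
    using assms(1) unfolding C2_manifold_around_def by blast
  interpret c2m M u U m h g H
    by unfold_locales (use oU uU uM d Hc MU inj ind in auto)
  obtain r0 Cb where r0: "r0 > 0" and Cb: "Cb > 0" and VU: "ball u r0 \<subseteq> U"
    and bnd: "\<forall>x\<in>ball u r0. \<forall>c. (\<Sum>i<m. \<bar>c i\<bar>) \<le> Cb * norm (Sg x c)"
    using coef_bound by blast
  interpret c2mb M u U m h g H r0 Cb
    by unfold_locales (use r0 Cb VU bnd in auto)
  show ?thesis by (rule main[OF assms(2)])
qed

end
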